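(* Let $n\ge2$ and let $T=P(x,u_0,u_1,u_2)$, with $P$ a real polynomial of total degree at least $2$ in $u_0,u_1,u_2$ (a genuinely non-linear operator of order at most two). If $T(\mathcal P_n)\subset\mathcal P_n$, then $n\le4$.
   Context: Operators are identified with polynomials $P(x,u_0,u_1,u_2)$ acting on smooth $f$ by $P[f](x)=P(x,f(x),f'(x),f''(x))$. $\mathcal P_s$ denotes the space of real polynomials in $x$ of degree at most $s$. *)

theory Defs
  imports "HOL-Computational_Algebra.Polynomial"
begin

text \<open>A real polynomial P(x,u0,u1,u2) in four variables is represented by its
  coefficient function: c (a,i,j,k) is the coefficient of x^a u0^i u1^j u2^k.
  It must have finite support.\<close>

type_synonym opoly = "nat \<times> nat \<times> nat \<times> nat \<Rightarrow> real"

definition opoly_finite :: "opoly \<Rightarrow> bool" where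
  "opoly_finite c \<longleftrightarrow> finite {m. c m \<noteq> 0}"

definition opoly_eval :: "opoly \<Rightarrow> real \<Rightarrow> real \<Rightarrow> real \<Rightarrow> real \<Rightarrow> real" where
  "opoly_eval c x u0 u1 u2 =
     (\<Sum>m\<in>{m. c m \<noteq> 0}. case m of (a,i,j,k) \<Rightarrow> c m * x^a * u0^i * u1^j * u2^k)"

definition opoly_udeg_ge2 :: "opoly \<Rightarrow> bool" where
  "opoly_udeg_ge2 c \<longleftrightarrow> (\<exists>a i j k. c (a,i,j,k) \<noteq> 0 \<and> i + j + k \<ge> 2)"

definition apply_op :: "opoly \<Rightarrow> real poly \<Rightarrow> real \<Rightarrow> real" where
  "apply_op c f x = opoly_eval c x (poly f x) (poly (pderiv f) x) (poly (pderiv (pderiv f)) x)"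

definition preserves_Pn :: "opoly \<Rightarrow> nat \<Rightarrow> bool" where
  "preserves_Pn c n \<longleftrightarrow>
     (\<forall>f::real poly. degree f \<le> n \<longrightarrow> (\<exists>g::real poly. degree g \<le> n \<and> (\<forall>x. apply_op c f x = poly g x)))"

end

theory Submission
  imports Defs
begin

definition tm :: "opoly \<Rightarrow> nat \<times> nat \<times> nat \<times> nat \<Rightarrow> real poly \<Rightarrow> real poly" where
  "tm c m f = (case m of (a,i,j,k) \<Rightarrow> smult (c m) (monom 1 a * f^i * (pderiv f)^j * (pderiv (pderiv f))^k))"

definition opp :: "opoly \<Rightarrow> real poly \<Rightarrow> real poly" where
  "opp c f = (\<Sum>m\<in>{m. c m \<noteq> 0}. tm c m f)"

lemma poly_tm: "poly (tm c m f) x = (case m of (a,i,j,k) \<Rightarrow> c m * x^a * poly f x ^ i * poly (pderiv f) x ^ j * poly (pderiv (pderiv f)) x ^ k)"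
  by (cases m) (simp add: tm_def poly_monom)

lemma poly_opp: "poly (opp c f) x = apply_op c f x"
  unfolding opp_def apply_op_def opoly_eval_def poly_sum poly_tm by simp

lemma opp_deg:
  assumes "preserves_Pn c n" "degree f \<le> n"
  shows "degree (opp c f) \<le> n"
proof -
  obtain g where g: "degree g \<le> n" "\<forall>x. apply_op c f x = poly g x"
    using assms unfolding preserves_Pn_def by blast
  have "poly (opp c f) = poly g" using g(2) by (auto simp: poly_opp)
  then have "opp c f = g" by (simp add: poly_eq_poly_eq_iff)
  then show ?thesis using g(1) by simp
qed

definition dg :: "nat \<times> nat \<times> nat \<times> nat \<Rightarrow> nat" where
  "dg m = (case m of (a,i,j,k) \<Rightarrow> i+j+k)"
definition wt :: "nat \<times> nat \<times> nat \<times> nat \<Rightarrow> int" where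
  "wt m = (case m of (a,i,j,k) \<Rightarrow> int a - int j - 2 * int k)"
definition Mset :: "opoly \<Rightarrow> int \<Rightarrow> nat \<Rightarrow> (nat \<times> nat \<times> nat \<times> nat) set" where
  "Mset c w d = {m. c m \<noteq> 0 \<and> dg m = d \<and> wt m = w}"
definition Sop :: "opoly \<Rightarrow> int \<Rightarrow> nat \<Rightarrow> real poly \<Rightarrow> real poly" where
  "Sop c w d f = (\<Sum>m\<in>Mset c w d. tm c m f)"

lemma sep_poly:
  fixes b :: "'m \<Rightarrow> real"
  assumes "finite S" "\<forall>t>0. (\<Sum>m\<in>S. b m * t ^ E m) = 0"
  shows "(\<Sum>m\<in>{m\<in>S. E m = e}. b m) = 0"
proof -
  define P where "P = (\<Sum>m\<in>S. monom (b m) (E m))"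
  have "poly P t = (\<Sum>m\<in>S. b m * t ^ E m)" for t
    by (simp add: P_def poly_sum poly_monom)
  then have "{t::real. t > 0} \<subseteq> {t. poly P t = 0}" using assms(2) by auto
  moreover have "infinite {t::real. t > 0}"
    using infinite_Ioi[of "0::real"] by (simp add: greaterThan_def)
  ultimately have "infinite {t. poly P t = 0}" using finite_subset by blast
  then have "P = 0" using poly_roots_finite by blast
  then have "coeff P e = 0" by simp
  moreover have "coeff P e = (\<Sum>m\<in>S. if E m = e then b m else 0)"
    by (simp add: P_def coeff_sum coeff_monom)
  moreover have "(\<Sum>m\<in>S. if E m = e then b m else 0) = (\<Sum>m\<in>{m\<in>S. E m = e}. b m)"
    using assms(1) by (simp add: sum.inter_filter)
  ultimately show ?thesis by simp
qed

lemma poly_scale: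
  fixes f :: "real poly" and t :: real and A :: nat
  defines "ft \<equiv> smult (t^A) (pcompose f [:0,t:])"
  shows "poly ft x = t^A * poly f (t*x)"
    and "poly (pderiv ft) x = t^A * t * poly (pderiv f) (t*x)"
    and "poly (pderiv (pderiv ft)) x = t^A * t^2 * poly (pderiv (pderiv f)) (t*x)"
proof -
  show "poly ft x = t^A * poly f (t*x)" by (simp add: ft_def poly_pcompose mult.commute)
  have d1: "pderiv ft = smult (t^A * t) (pcompose (pderiv f) [:0,t:])"
    by (simp add: ft_def pderiv_smult pderiv_pcompose pderiv_pCons)
  show "poly (pderiv ft) x = t^A * t * poly (pderiv f) (t*x)"
    by (simp add: d1 poly_pcompose mult.commute)
  have "pderiv (pderiv ft) = smult (t^A * t * t) (pcompose (pderiv (pderiv f)) [:0,t:])"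
    by (simp add: d1 pderiv_smult pderiv_pcompose pderiv_pCons mult.assoc)
  then show "poly (pderiv (pderiv ft)) x = t^A * t^2 * poly (pderiv (pderiv f)) (t*x)"
    by (simp add: poly_pcompose mult.commute power2_eq_square mult.assoc)
qed

lemma pw_aux: "(t::real)^a * (c * x^a * (T*F)^i * (T*t*G)^j * (T*t^2*H)^k) = T^(i+j+k) * t^j * t^(2*k) * (c*(t*x)^a * F^i * G^j * H^k)"
proof -
  have e: "(t^2)^k = (t^k)^2" by (metis power_mult mult.commute)
  show ?thesis by (simp add: power_mult_distrib power_add power_mult ac_simps e)
qed

lemma coeff_tm_scale:
  fixes f :: "real poly" and t :: real and A :: nat
  assumes "t \<noteq> 0" and m: "m = (a,i,j,k)"
  defines "ft \<equiv> smult (t^A) (pcompose f [:0,t:])"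
  shows "t^a * coeff (tm c m ft) N = t^(A*(i+j+k) + j + 2*k + N) * coeff (tm c m f) N"
proof -
  have "poly (smult (t^a) (tm c m ft)) x = poly (smult (t^(A*(i+j+k) + j + 2*k)) (pcompose (tm c m f) [:0,t:])) x" for x
  proof -
    have "poly (smult (t^a) (tm c m ft)) x = t^a * (c m * x^a * (t^A * poly f (t*x))^i * (t^A * t * poly (pderiv f) (t*x))^j * (t^A * t^2 * poly (pderiv (pderiv f)) (t*x))^k)"
      unfolding poly_smult poly_tm m prod.case poly_scale[of t A f, folded ft_def] by simp
    also have "\<dots> = (t^A)^(i+j+k) * t^j * t^(2*k) * (c m * (t*x)^a * poly f (t*x)^i * poly (pderiv f) (t*x)^j * poly (pderiv (pderiv f)) (t*x)^k)"
      by (rule pw_aux)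
    also have "\<dots> = t^(A*(i+j+k) + j + 2*k) * (c m * (t*x)^a * poly f (t*x)^i * poly (pderiv f) (t*x)^j * poly (pderiv (pderiv f)) (t*x)^k)"
      by (simp add: power_add power_mult)
    also have "\<dots> = poly (smult (t^(A*(i+j+k) + j + 2*k)) (pcompose (tm c m f) [:0,t:])) x"
      by (simp add: poly_pcompose poly_tm m mult.commute)
    finally show ?thesis .
  qed
  then have "smult (t^a) (tm c m ft) = smult (t^(A*(i+j+k) + j + 2*k)) (pcompose (tm c m f) [:0,t:])"
    by (simp add: poly_eq_poly_eq_iff[symmetric] fun_eq_iff del: poly_smult)
  then have "coeff (smult (t^a) (tm c m ft)) N = coeff (smult (t^(A*(i+j+k) + j + 2*k)) (pcompose (tm c m f) [:0,t:])) N"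
    by simp
  then show ?thesis by (simp add: coeff_pcompose_linear power_add)
qed

lemma divmod_uniq:
  fixes A q1 q2 r1 r2 :: nat
  assumes "r1 < A" "r2 < A" "A*q1 + r1 = A*q2 + r2"
  shows "q1 = q2 \<and> r1 = r2"
proof -
  have "(A*q1 + r1) div A = q1" using assms(1) by (simp add: div_add1_eq)
  moreover have "(A*q2 + r2) div A = q2" using assms(2) by (simp add: div_add1_eq)
  ultimately have "q1 = q2" using assms(3) by metis
  then show ?thesis using assms(3) by simp
qed

lemma separation:
  assumes fin: "opoly_finite c" and pres: "preserves_Pn c n" and deg: "degree f \<le> n" and N: "N > n"
  shows "coeff (Sop c w d f) N = 0"
proof -
  let ?S = "{m. c m \<noteq> 0}"
  have finS: "finite ?S" using fin by (simp add: opoly_finite_def)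
  define amax where "amax = (\<Sum>m\<in>?S. fst m)"
  define dmax where "dmax = (\<Sum>m\<in>?S. dg m)"
  define A where "A = amax + 2*dmax + N + 1"
  have a_le: "fst m \<le> amax" if "m \<in> ?S" for m
    unfolding amax_def using finS that by (intro member_le_sum) auto
  have d_le: "dg m \<le> dmax" if "m \<in> ?S" for m
    unfolding dmax_def using finS that by (intro member_le_sum) auto
  define E where "E m = A * dg m + nat (int N + int amax - wt m)" for m
  define b where "b m = coeff (tm c m f) N" for m
  have key: "\<forall>t>0. (\<Sum>m\<in>?S. b m * t ^ E m) = 0"
  proof (intro allI impI)
    fix t :: real assume t: "t > 0"
    define ft where "ft = smult (t^A) (pcompose f [:0,t:])"
    have "degree ft \<le> n"
    proof -
      have "degree ft \<le> degree (pcompose f [:0,t:])" unfolding ft_def by (rule degree_smult_le)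
      also have "\<dots> = degree f" using t by (simp add: degree_pcompose)
      finally show ?thesis using deg by simp
    qed
    then have "degree (opp c ft) \<le> n" using pres by (rule opp_deg[rotated])
    then have "coeff (opp c ft) N = 0" using N by (simp add: coeff_eq_0)
    then have "(\<Sum>m\<in>?S. coeff (tm c m ft) N) = 0" by (simp add: opp_def coeff_sum)
    then have "(\<Sum>m\<in>?S. t^amax * coeff (tm c m ft) N) = 0" by (simp add: sum_distrib_left[symmetric])
    moreover have "t^amax * coeff (tm c m ft) N = b m * t ^ E m" if "m \<in> ?S" for m
    proof -
      obtain a i j k where m: "m = (a,i,j,k)" by (cases m) auto
      have aa: "a \<le> amax" using a_le[OF that] m by simp
      have "t^amax * coeff (tm c m ft) N = t^(amax - a) * (t^a * coeff (tm c m ft) N)"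
        using aa by (simp add: power_add[symmetric] mult.assoc)
      also have "\<dots> = t^(amax - a) * (t^(A*(i+j+k) + j + 2*k + N) * b m)"
        using coeff_tm_scale[where t=t and m=m and a=a and i=i and j=j and k=k and A=A and f=f and c=c and N=N] t m by (simp add: ft_def b_def)
      also have "\<dots> = b m * t^(amax - a + (A*(i+j+k) + j + 2*k + N))"
        by (simp add: power_add)
      also have "amax - a + (A*(i+j+k) + j + 2*k + N) = E m"
        using aa by (simp add: E_def m dg_def wt_def nat_diff_distrib)
      finally show ?thesis .
    qed
    ultimately show "(\<Sum>m\<in>?S. b m * t ^ E m) = 0" by simp
  qed
  show ?thesis
  proof (cases "Mset c w d = {}")
    case True then show ?thesis by (simp add: Sop_def)
  next
    case False
    then obtain m1 where m1: "m1 \<in> Mset c w d" by blast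
    have rng: "0 \<le> int N + int amax - wt m \<and> nat (int N + int amax - wt m) < A" if "m \<in> ?S" for m
    proof -
      obtain a i j k where m: "m = (a,i,j,k)" by (cases m) auto
      have "a \<le> amax" "i+j+k \<le> dmax" using a_le[OF that] d_le[OF that] m by (auto simp: dg_def)
      then show ?thesis by (simp add: m wt_def A_def)
    qed
    have cls: "{m\<in>?S. E m = E m1} = Mset c w d"
    proof (intro set_eqI iffI)
      fix m assume "m \<in> {m\<in>?S. E m = E m1}"
      then have mS: "m \<in> ?S" and e: "E m = E m1" by auto
      have m1S: "m1 \<in> ?S" using m1 by (simp add: Mset_def)
      from divmod_uniq[OF rng[OF mS, THEN conjunct2] rng[OF m1S, THEN conjunct2]] e
      have "dg m = dg m1" "nat (int N + int amax - wt m) = nat (int N + int amax - wt m1)"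
        by (auto simp: E_def)
      then have "dg m = dg m1" "wt m = wt m1" using rng[OF mS] rng[OF m1S] by auto
      then show "m \<in> Mset c w d" using m1 mS by (simp add: Mset_def)
    next
      fix m assume "m \<in> Mset c w d"
      then show "m \<in> {m\<in>?S. E m = E m1}" using m1 by (simp add: Mset_def E_def)
    qed
    have "(\<Sum>m\<in>{m\<in>?S. E m = E m1}. b m) = 0" by (rule sep_poly[OF finS key])
    then have "(\<Sum>m\<in>Mset c w d. b m) = 0" by (simp only: cls)
    then show ?thesis by (simp add: Sop_def coeff_sum b_def)
  qed
qed

definition Gf :: "opoly \<Rightarrow> int \<Rightarrow> nat \<Rightarrow> real \<Rightarrow> real \<Rightarrow> real \<Rightarrow> real" where
  "Gf c w d U0 U1 U2 = (\<Sum>m\<in>Mset c w d. case m of (a,i,j,k) \<Rightarrow> c m * U0^i * U1^j * U2^k)"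

lemma Sop_eval:
  assumes x: "x \<noteq> 0"
  shows "poly (Sop c w d f) x = x powi w * Gf c w d (poly f x) (x * poly (pderiv f) x) (x^2 * poly (pderiv (pderiv f)) x)"
proof -
  have "poly (tm c m f) x = x powi w * (case m of (a,i,j,k) \<Rightarrow> c m * (poly f x)^i * (x * poly (pderiv f) x)^j * (x^2 * poly (pderiv (pderiv f)) x)^k)"
    if "m \<in> Mset c w d" for m
  proof -
    obtain a i j k where m: "m = (a,i,j,k)" by (cases m) auto
    have wa: "w = int a - int j - 2 * int k" using that m by (simp add: Mset_def wt_def)
    have "x powi (w + int j + 2 * int k) = x powi w * x powi (int j) * x powi (int (2*k))"
      using x by (simp add: power_int_add)
    also have "\<dots> = x powi w * x^j * x^(2*k)" by (simp only: power_int_of_nat)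
    finally have 1: "x powi (w + int j + 2 * int k) = x powi w * x^j * x^(2*k)" .
    have "w + int j + 2 * int k = int a" using wa by simp
    then have "x^a = x powi (w + int j + 2 * int k)" by (simp only: power_int_of_nat)
    with 1 have xa: "x^a = x powi w * x^j * x^(2*k)" by simp
    have e2: "(x^2 * z)^k = x^(2*k) * z^k" for z :: real
      by (simp add: power_mult_distrib power_mult)
    have e3: "(x*z)^j = x^j * z^j" for z :: real by (simp add: power_mult_distrib)
    show ?thesis
      unfolding poly_tm m prod.case xa e2 e3
      by (simp only: ac_simps)
  qed
  then show ?thesis
    by (simp add: Sop_def Gf_def poly_sum sum_distrib_left)
qed

lemma Gf_homog:
  "Gf c w d (t*U0) (t*U1) (t*U2) = t^d * Gf c w d U0 U1 U2"
proof -
  have "(case m of (a,i,j,k) \<Rightarrow> c m * (t*U0)^i * (t*U1)^j * (t*U2)^k) = t^d * (case m of (a,i,j,k) \<Rightarrow> c m * U0^i * U1^j * U2^k)"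
    if "m \<in> Mset c w d" for m
  proof -
    obtain a i j k where m: "m = (a,i,j,k)" by (cases m) auto
    have "d = i + j + k" using that m by (simp add: Mset_def dg_def)
    then show ?thesis by (simp add: m power_mult_distrib power_add ac_simps)
  qed
  then show ?thesis by (simp add: Gf_def sum_distrib_left)
qed

lemma poly_eq_nz:
  fixes P Q :: "real poly"
  assumes "\<forall>x. x \<noteq> 0 \<longrightarrow> poly P x = poly Q x"
  shows "P = Q"
proof -
  have "{x::real. x > 0} \<subseteq> {x. poly (P - Q) x = 0}" using assms by auto
  moreover have "infinite {x::real. x > 0}"
    using infinite_Ioi[of "0::real"] by (simp add: greaterThan_def)
  ultimately have "infinite {x. poly (P - Q) x = 0}" using finite_subset by blast
  then have "P - Q = 0" using poly_roots_finite by blast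
  then show ?thesis by simp
qed

lemma gamma:
  fixes \<alpha> \<beta> \<gamma> :: real and p :: "real poly"
  assumes fin: "opoly_finite c" and pres: "preserves_Pn c n" and n4: "n \<ge> 4"
    and wlow: "w + 2 * int d \<ge> 0"
    and degp: "degree p \<le> 2*d"
    and eq: "\<forall>y. Gf c w d (\<alpha> + \<beta>*y + \<gamma>*y^2)
       (\<alpha>*real n + \<beta>*y*(real n - 1) + \<gamma>*y^2*(real n - 2))
       (\<alpha>*(real n*(real n - 1)) + \<beta>*y*((real n - 1)*(real n - 2)) + \<gamma>*y^2*((real n - 2)*(real n - 3))) = poly p y"
    and r: "int r + int n < w + int n * int d"
  shows "coeff p r = 0"
proof (cases "r \<le> 2*d")
  case False then show ?thesis using degp by (simp add: coeff_eq_0)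
next
  case rle: True
  define f where "f = monom \<alpha> n + monom \<beta> (n-1) + monom \<gamma> (n-2)"
  have degf: "degree f \<le> n" unfolding f_def
    by (intro degree_add_le degree_monom_le[THEN order_trans]) auto
  have n1: "real (n - 1) = real n - 1" "real (n - 2) = real n - 2" "real (n - 3) = real n - 3"
      "real (n - Suc 0) = real n - 1" "real (n - Suc (Suc 0)) = real n - 2" "real (n - Suc (Suc (Suc 0))) = real n - 3"
    using n4 by (auto simp: of_nat_diff)
  have pf: "poly f x = \<alpha>*x^n + \<beta>*x^(n-1) + \<gamma>*x^(n-2)" for x
    by (simp add: f_def poly_monom)
  have pf1: "poly (pderiv f) x = real n*\<alpha>*x^(n-1) + real (n-1)*\<beta>*x^(n-2) + real (n-2)*\<gamma>*x^(n-3)" for x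
    by (simp add: f_def pderiv_add pderiv_monom poly_monom eval_nat_numeral)
  have pf2: "poly (pderiv (pderiv f)) x = real (n-1)*(real n*\<alpha>)*x^(n-2) + real (n-2)*(real (n-1)*\<beta>)*x^(n-3) + real (n-3)*(real (n-2)*\<gamma>)*x^(n-4)" for x
    by (simp add: f_def pderiv_add pderiv_monom poly_monom eval_nat_numeral)
  define V0 where "V0 y = \<alpha> + \<beta>*y + \<gamma>*y^2" for y :: real
  define V1 where "V1 y = \<alpha>*real n + \<beta>*y*(real n - 1) + \<gamma>*y^2*(real n - 2)" for y :: real
  define V2 where "V2 y = \<alpha>*(real n*(real n - 1)) + \<beta>*y*((real n - 1)*(real n - 2)) + \<gamma>*y^2*((real n - 2)*(real n - 3))" for y :: real
  have psum: "poly p y = (\<Sum>r\<le>2*d. coeff p r * y^r)" for y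
  proof -
    have "poly p y = (\<Sum>r\<le>degree p. coeff p r * y^r)" by (rule poly_altdef)
    also have "\<dots> = (\<Sum>r\<le>2*d. coeff p r * y^r)"
      using degp by (intro sum.mono_neutral_left) (auto simp: coeff_eq_0)
    finally show ?thesis .
  qed
  define ex where "ex r = nat (w + int n * int d + 2 * int d - int r)" for r
  define P2 where "P2 = (\<Sum>r\<le>2*d. monom (coeff p r) (ex r))"
  have nd: "int n * int d \<ge> 2 * int d" using n4 by (intro mult_right_mono) auto
  have P: "Sop c w d f * monom 1 (2*d) = P2"
  proof (rule poly_eq_nz, intro allI impI)
    fix x :: real assume x: "x \<noteq> 0"
    define y where "y = inverse x"
    have xy: "x * y = 1" using x by (simp add: y_def)
    have pw: "x^(n-k) = x^n * y^k" if "k \<le> n" for k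
    proof -
      have "x^n = x^(n-k) * x^k" using that by (simp add: power_add[symmetric])
      then have "x^n * y^k = x^(n-k) * (x*y)^k" by (simp add: power_mult_distrib)
      then show ?thesis using xy by simp
    qed
    have e0: "poly f x = x^n * V0 y"
      using pw[of 1] pw[of 2] n4 by (simp add: pf V0_def algebra_simps)
    have xy2: "x * (x * (y * y)) = 1" by (metis xy mult.assoc mult.left_commute mult_1_right)
    have q1: "x * x^(n-1) = x^n" "x * x^(n-2) = x^n * y" "x * x^(n-3) = x^n * y^2"
      "x^2 * x^(n-2) = x^n" "x^2 * x^(n-3) = x^n * y" "x^2 * x^(n-4) = x^n * y^2"
      using pw[of 1] pw[of 2] pw[of 3] pw[of 4] n4 xy xy2
      by (simp_all add: power2_eq_square power3_eq_cube eval_nat_numeral algebra_simps)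
    have "x * poly (pderiv f) x = real n*\<alpha>*(x*x^(n-1)) + real (n-1)*\<beta>*(x*x^(n-2)) + real (n-2)*\<gamma>*(x*x^(n-3))"
      by (simp add: pf1 algebra_simps)
    also have "\<dots> = x^n * V1 y" unfolding q1 by (simp add: V1_def n1 algebra_simps)
    finally have e1: "x * poly (pderiv f) x = x^n * V1 y" .
    have "x^2 * poly (pderiv (pderiv f)) x = real (n-1)*(real n*\<alpha>)*(x^2*x^(n-2)) + real (n-2)*(real (n-1)*\<beta>)*(x^2*x^(n-3)) + real (n-3)*(real (n-2)*\<gamma>)*(x^2*x^(n-4))"
      by (simp add: pf2 algebra_simps)
    also have "\<dots> = x^n * V2 y" unfolding q1 by (simp add: V2_def n1 algebra_simps)
    finally have e2: "x^2 * poly (pderiv (pderiv f)) x = x^n * V2 y" .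
    have "poly (Sop c w d f) x = x powi w * Gf c w d (x^n * V0 y) (x^n * V1 y) (x^n * V2 y)"
      using Sop_eval[OF x] e0 e1 e2 by simp
    also have "\<dots> = x powi w * ((x^n)^d * poly p y)"
      using eq by (simp add: Gf_homog V0_def V1_def V2_def)
    finally have s1: "poly (Sop c w d f) x = x powi w * ((x^n)^d * poly p y)" .
    have trm: "x powi w * ((x^n)^d * (coeff p r * y^r)) * x^(2*d) = coeff p r * x^(ex r)" if "r \<le> 2*d" for r
    proof -
      have A1: "(x^n)^d = x powi (int (n*d))" by (simp only: power_int_of_nat power_mult)
      have A2: "x^(2*d) = x powi (int (2*d))" by (simp only: power_int_of_nat)
      have A3: "y^r = x powi (- int r)" by (simp add: y_def power_int_minus power_inverse)
      have "x powi w * ((x^n)^d * (coeff p r * y^r)) * x^(2*d)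
          = coeff p r * (x powi w * x powi (int (n*d)) * x powi (- int r) * x powi (int (2*d)))"
        unfolding A1 A2 A3 by (simp only: ac_simps)
      also have "x powi w * x powi (int (n*d)) * x powi (- int r) * x powi (int (2*d)) = x powi (w + int (n*d) + (- int r) + int (2*d))"
        by (simp only: power_int_add[OF disjI1[OF x]])
      also have "w + int (n*d) + (- int r) + int (2*d) = int (ex r)"
        using that wlow nd by (simp add: ex_def)
      also have "x powi (int (ex r)) = x^(ex r)" by (simp only: power_int_of_nat)
      finally show ?thesis .
    qed
    have "poly (Sop c w d f * monom 1 (2*d)) x = x powi w * ((x^n)^d * (\<Sum>r\<le>2*d. coeff p r * y^r)) * x^(2*d)"
      by (simp add: s1 psum poly_monom)
    also have "\<dots> = (\<Sum>r\<le>2*d. x powi w * ((x^n)^d * (coeff p r * y^r)) * x^(2*d))"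
      by (simp add: sum_distrib_left sum_distrib_right)
    also have "\<dots> = (\<Sum>r\<le>2*d. coeff p r * x^(ex r))"
      by (intro sum.cong refl trm) auto
    also have "\<dots> = poly P2 x" by (simp add: P2_def poly_sum poly_monom)
    finally show "poly (Sop c w d f * monom 1 (2*d)) x = poly P2 x" .
  qed
  have inj: "ex r' = ex r \<longleftrightarrow> r' = r" if "r' \<le> 2*d" for r'
    using that rle wlow nd by (auto simp: ex_def)
  have "coeff P2 (ex r) = (\<Sum>r'\<le>2*d. if r' = r then coeff p r' else 0)"
    unfolding P2_def coeff_sum coeff_monom by (intro sum.cong refl) (auto simp: inj)
  also have "\<dots> = coeff p r" using rle by simp
  finally have c2: "coeff P2 (ex r) = coeff p r" .
  have exr: "ex r = nat (w + int n * int d - int r) + 2*d" using r wlow nd by (simp add: ex_def)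
  have bigN: "nat (w + int n * int d - int r) > n" using r by simp
  have "coeff (Sop c w d f * monom 1 (2*d)) (ex r) = coeff (Sop c w d f) (nat (w + int n * int d - int r))"
    unfolding exr by (simp add: mult.commute[of _ "monom 1 (2*d)"] coeff_monom_mult)
  also have "\<dots> = 0" by (rule separation[OF fin pres degf bigN])
  finally show ?thesis using P c2 by simp
qed

definition Al :: "nat \<Rightarrow> int \<Rightarrow> (nat \<times> nat \<times> nat) list" where
  "Al d w = map (\<lambda>(j,k). (d - j - k, j, k))
     (filter (\<lambda>(j,k). j + k \<le> d \<and> 0 \<le> w + int j + 2 * int k) (List.product [0..<Suc d] [0..<Suc d]))"

definition gg :: "opoly \<Rightarrow> int \<Rightarrow> nat \<Rightarrow> nat \<Rightarrow> nat \<Rightarrow> real" where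
  "gg c w i j k = c (nat (w + int j + 2 * int k), i, j, k)"

lemma mem_Al: "(i,j,k) \<in> set (Al d w) \<longleftrightarrow> i + j + k = d \<and> 0 \<le> w + int j + 2 * int k"
proof
  assume "(i,j,k) \<in> set (Al d w)"
  then show "i + j + k = d \<and> 0 \<le> w + int j + 2 * int k" unfolding Al_def by auto
next
  assume h: "i + j + k = d \<and> 0 \<le> w + int j + 2 * int k"
  show "(i,j,k) \<in> set (Al d w)" unfolding Al_def
    using h by (auto intro!: image_eqI[where x="(j,k)"])
qed

lemma Gf_reindex:
  "Gf c w d U0 U1 U2 = (\<Sum>t\<in>set (Al d w). case t of (i,j,k) \<Rightarrow> gg c w i j k * U0^i * U1^j * U2^k)"
proof -
  define h where "h t = (case t of (i,j,k) \<Rightarrow> (nat (w + int j + 2 * int k), i, j, k))" for t :: "nat \<times> nat \<times> nat"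
  define B where "B = {t\<in>set (Al d w). (case t of (i,j,k) \<Rightarrow> gg c w i j k) \<noteq> 0}"
  have inj: "inj_on h B" unfolding inj_on_def h_def by auto
  have img: "Mset c w d = h ` B"
  proof (intro set_eqI iffI)
    fix m assume "m \<in> Mset c w d"
    then obtain a i j k where m: "m = (a,i,j,k)" "c m \<noteq> 0" "i+j+k = d" "int a - int j - 2 * int k = w"
      by (cases m) (auto simp: Mset_def dg_def wt_def)
    then have "(i,j,k) \<in> B" "m = h (i,j,k)"
      by (auto simp: B_def mem_Al gg_def h_def)
    then show "m \<in> h ` B" by blast
  next
    fix m assume "m \<in> h ` B"
    then obtain i j k where "(i,j,k) \<in> B" "m = h (i,j,k)" by auto
    then show "m \<in> Mset c w d"
      by (auto simp: B_def mem_Al gg_def h_def Mset_def dg_def wt_def)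
  qed
  have "Gf c w d U0 U1 U2 = (\<Sum>t\<in>B. case h t of (a,i,j,k) \<Rightarrow> c (h t) * U0^i * U1^j * U2^k)"
    unfolding Gf_def img by (rule sum.reindex[OF inj, unfolded comp_def])
  also have "\<dots> = (\<Sum>t\<in>B. case t of (i,j,k) \<Rightarrow> gg c w i j k * U0^i * U1^j * U2^k)"
    by (intro sum.cong refl) (auto simp: h_def gg_def)
  also have "\<dots> = (\<Sum>t\<in>set (Al d w). case t of (i,j,k) \<Rightarrow> gg c w i j k * U0^i * U1^j * U2^k)"
    by (intro sum.mono_neutral_left) (auto simp: B_def)
  finally show ?thesis .
qed

lemma two_var_id:
  fixes h :: "'t \<Rightarrow> real"
  assumes fin: "finite A" and inj: "inj_on (\<lambda>t. (p t, q t)) A"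
    and z: "\<forall>u v. (\<Sum>t\<in>A. h t * u^(p t) * v^(q t)) = 0"
    and t0: "t0 \<in> A"
  shows "h t0 = 0"
proof -
  have c1: "(\<Sum>t\<in>{t\<in>A. q t = k}. h t * u^(p t)) = 0" for u k
  proof -
    define P where "P = (\<Sum>t\<in>A. monom (h t * u^(p t)) (q t))"
    have "poly P v = 0" for v using z by (simp add: P_def poly_sum poly_monom mult.assoc)
    then have "P = 0" by (simp add: poly_eq_poly_eq_iff[symmetric] fun_eq_iff)
    then have "coeff P k = 0" by simp
    moreover have "coeff P k = (\<Sum>t\<in>A. if q t = k then h t * u^(p t) else 0)"
      by (simp add: P_def coeff_sum coeff_monom)
    ultimately show ?thesis using fin by (simp add: sum.inter_filter)
  qed
  define Q where "Q = (\<Sum>t\<in>{t\<in>A. q t = q t0}. monom (h t) (p t))"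
  have "poly Q u = 0" for u using c1[of u "q t0"] by (simp add: Q_def poly_sum poly_monom)
  then have "Q = 0" by (simp add: poly_eq_poly_eq_iff[symmetric] fun_eq_iff)
  then have "coeff Q (p t0) = 0" by simp
  moreover have "coeff Q (p t0) = (\<Sum>t\<in>{t\<in>A. q t = q t0}. if p t = p t0 then h t else 0)"
    by (simp add: Q_def coeff_sum coeff_monom)
  moreover have "\<dots> = (\<Sum>t\<in>{t\<in>A. q t = q t0}. if t = t0 then h t else 0)"
    using inj t0 by (intro sum.cong refl) (auto simp: inj_on_def)
  moreover have "\<dots> = h t0" using fin t0 by simp
  ultimately show ?thesis by simp
qed

lemma gg_zero_of_Gf_zero:
  assumes "\<forall>U0 U1 U2. Gf c w d U0 U1 U2 = 0" and "(i,j,k) \<in> set (Al d w)"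
  shows "gg c w i j k = 0"
proof -
  let ?A = "set (Al d w)"
  have inj: "inj_on (\<lambda>t. (fst (snd t), snd (snd t))) ?A"
    by (auto simp: inj_on_def mem_Al)
  have "\<forall>u v. (\<Sum>t\<in>?A. (case t of (i,j,k) \<Rightarrow> gg c w i j k) * u^(fst (snd t)) * v^(snd (snd t))) = 0"
  proof (intro allI)
    fix u v
    have "0 = Gf c w d 1 u v" using assms(1) by simp
    also have "\<dots> = (\<Sum>t\<in>?A. (case t of (i,j,k) \<Rightarrow> gg c w i j k) * u^(fst (snd t)) * v^(snd (snd t)))"
      unfolding Gf_reindex by (intro sum.cong refl) auto
    finally show "(\<Sum>t\<in>?A. (case t of (i,j,k) \<Rightarrow> gg c w i j k) * u^(fst (snd t)) * v^(snd (snd t))) = 0" by simp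
  qed
  from two_var_id[OF _ inj this assms(2)] show ?thesis by simp
qed

lemma deg_quad: "degree [:a, b, c:] \<le> 2"
  using degree_pCons_le[of a "[:b,c:]"] degree_pCons_le[of b "[:c:]"] by simp

lemma easy_regime:
  assumes fin: "opoly_finite c" and pres: "preserves_Pn c n" and n5: "n \<ge> 5"
    and wlow: "w + 2 * int d \<ge> 0"
    and E: "2 * int d + int n < w + int n * int d"
  shows "\<forall>U0 U1 U2. Gf c w d U0 U1 U2 = 0"
proof -
  have finM: "finite (Mset c w d)"
  proof (rule finite_subset)
    show "Mset c w d \<subseteq> {m. c m \<noteq> 0}" by (auto simp: Mset_def)
    show "finite {m. c m \<noteq> 0}" using fin by (simp add: opoly_finite_def)
  qed
  have V: "Gf c w d (\<alpha> + \<beta> + \<gamma>) (\<alpha>*real n + \<beta>*(real n - 1) + \<gamma>*(real n - 2))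
       (\<alpha>*(real n*(real n - 1)) + \<beta>*((real n - 1)*(real n - 2)) + \<gamma>*((real n - 2)*(real n - 3))) = 0" for \<alpha> \<beta> \<gamma>
  proof -
    define q0 where "q0 = [:\<alpha>, \<beta>, \<gamma>:]"
    define q1 where "q1 = [:\<alpha>*real n, \<beta>*(real n - 1), \<gamma>*(real n - 2):]"
    define q2 where "q2 = [:\<alpha>*(real n*(real n - 1)), \<beta>*((real n - 1)*(real n - 2)), \<gamma>*((real n - 2)*(real n - 3)):]"
    define P where "P = (\<Sum>m\<in>Mset c w d. case m of (a,i,j,k) \<Rightarrow> smult (c m) (q0^i * q1^j * q2^k))"
    have pq0: "poly q0 y = \<alpha> + \<beta>*y + \<gamma>*y^2" for y by (simp add: q0_def algebra_simps power2_eq_square)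
    have pq1: "poly q1 y = \<alpha>*real n + \<beta>*y*(real n - 1) + \<gamma>*y^2*(real n - 2)" for y
      by (simp add: q1_def algebra_simps power2_eq_square)
    have pq2: "poly q2 y = \<alpha>*(real n*(real n - 1)) + \<beta>*y*((real n - 1)*(real n - 2)) + \<gamma>*y^2*((real n - 2)*(real n - 3))" for y
      by (simp add: q2_def algebra_simps power2_eq_square)
    have pP: "poly P y = Gf c w d (poly q0 y) (poly q1 y) (poly q2 y)" for y
      unfolding P_def Gf_def poly_sum by (intro sum.cong refl) (auto simp: mult.assoc)
    have degP: "degree P \<le> 2*d"
      unfolding P_def
    proof (rule degree_sum_le[OF finM])
      fix m assume mM: "m \<in> Mset c w d"
      obtain a i j k where m: "m = (a,i,j,k)" by (cases m) auto
      have ijk: "i + j + k = d" using mM m by (simp add: Mset_def dg_def)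
      have "degree (smult (c m) (q0^i * q1^j * q2^k)) \<le> degree (q0^i * q1^j * q2^k)"
        by (rule degree_smult_le)
      also have "\<dots> \<le> degree (q0^i) + degree (q1^j) + degree (q2^k)"
        by (metis add_le_mono1 degree_mult_le order_trans)
      also have "\<dots> \<le> i * degree q0 + j * degree q1 + k * degree q2"
        using degree_power_le[of q0 i] degree_power_le[of q1 j] degree_power_le[of q2 k] by (simp add: mult.commute)
      also have "\<dots> \<le> i * 2 + j * 2 + k * 2"
        unfolding q0_def q1_def q2_def by (intro add_mono mult_le_mono2 deg_quad)
      also have "\<dots> = 2 * d" using ijk by simp
      finally show "degree (case m of (a,i,j,k) \<Rightarrow> smult (c m) (q0^i * q1^j * q2^k)) \<le> 2 * d"
        by (simp add: m)
    qed
    have "coeff P r = 0" for r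
    proof (cases "r \<le> 2 * d")
      case True
      show ?thesis
      proof (rule gamma[OF fin pres _ wlow degP])
        show "4 \<le> n" using n5 by simp
        show "\<forall>y. Gf c w d (\<alpha> + \<beta>*y + \<gamma>*y^2)
         (\<alpha>*real n + \<beta>*y*(real n - 1) + \<gamma>*y^2*(real n - 2))
         (\<alpha>*(real n*(real n - 1)) + \<beta>*y*((real n - 1)*(real n - 2)) + \<gamma>*y^2*((real n - 2)*(real n - 3))) = poly P y"
          by (simp add: pP pq0 pq1 pq2)
        show "int r + int n < w + int n * int d" using True E by linarith
      qed
    next
      case False then show ?thesis using degP by (simp add: coeff_eq_0)
    qed
    then have "P = 0" by (simp add: poly_eq_iff)
    then have "poly P 1 = 0" by simp
    then show ?thesis by (simp add: pP pq0 pq1 pq2)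
  qed
  show ?thesis
  proof (intro allI)
    fix U0 U1 U2 :: real
    define A1 where "A1 = U1 - (real n - 2) * U0"
    define A2 where "A2 = U2 - (real n - 2) * (real n - 3) * U0"
    define \<alpha> where "\<alpha> = (A2 - 2 * (real n - 2) * A1) / 2"
    define \<beta> where "\<beta> = A1 - 2 * \<alpha>"
    define \<gamma> where "\<gamma> = U0 - \<alpha> - \<beta>"
    have "U0 = \<alpha> + \<beta> + \<gamma>" by (simp add: \<gamma>_def)
    moreover have "U1 = \<alpha>*real n + \<beta>*(real n - 1) + \<gamma>*(real n - 2)"
      by (simp add: \<gamma>_def \<beta>_def A1_def algebra_simps)
    moreover have "U2 = \<alpha>*(real n*(real n - 1)) + \<beta>*((real n - 1)*(real n - 2)) + \<gamma>*((real n - 2)*(real n - 3))"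
      unfolding \<gamma>_def \<beta>_def \<alpha>_def A1_def A2_def by (simp add: field_simps)
    ultimately show "Gf c w d U0 U1 U2 = 0" using V by simp
  qed
qed

lemma deg_Poly_le: "length xs \<le> Suc k \<Longrightarrow> degree (Poly xs) \<le> k"
  by (rule degree_le) (auto simp: nth_default_def)

lemma gammaL:
  fixes \<alpha> \<beta> \<gamma> :: real
  assumes fin: "opoly_finite c" and pres: "preserves_Pn c n" and n4: "n \<ge> 4"
    and wlow: "w + 2 * int d \<ge> 0"
    and len: "length xs \<le> Suc (2*d)"
    and eq: "\<forall>y. Gf c w d (\<alpha> + \<beta>*y + \<gamma>*y^2)
       (\<alpha>*real n + \<beta>*y*(real n - 1) + \<gamma>*y^2*(real n - 2))
       (\<alpha>*(real n*(real n - 1)) + \<beta>*y*((real n - 1)*(real n - 2)) + \<gamma>*y^2*((real n - 2)*(real n - 3))) = poly (Poly xs) y"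
    and r: "int r + int n < w + int n * int d"
  shows "nth_default 0 xs r = 0"
  using gamma[OF fin pres n4 wlow deg_Poly_le[OF len] eq r] by simp

lemma hard_5_2_1:
  assumes fin: "opoly_finite c" and pres: "preserves_Pn c 5" and mem: "(i,j,k) \<in> set (Al 2 (-1))"
  shows "gg c (-1) i j k = 0"
proof -
  have AlX: "Al 2 (-1) = [(1,0,1),(0,0,2),(1,1,0),(0,1,1),(0,2,0)]" by (simp add: Al_def upt_rec)
  have Gx: "Gf c (-1) 2 U0 U1 U2 = gg c (-1) 1 0 1 * U0 * U2 + gg c (-1) 0 0 2 * U2^2 + gg c (-1) 1 1 0 * U0 * U1 + gg c (-1) 0 1 1 * U1 * U2 + gg c (-1) 0 2 0 * U1^2" for U0 U1 U2
    by (simp add: Gf_reindex AlX algebra_simps)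
  have eq0: "\<forall>y. Gf c (-1) 2 (1 + 0*y + 0*y^2) (1*real 5 + 0*y*(real 5 - 1) + 0*y^2*(real 5 - 2)) (1*(real 5*(real 5 - 1)) + 0*y*((real 5 - 1)*(real 5 - 2)) + 0*y^2*((real 5 - 2)*(real 5 - 3))) = poly (Poly [(20 * gg c (-1) 1 0 1 + 400 * gg c (-1) 0 0 2 + 5 * gg c (-1) 1 1 0 + 100 * gg c (-1) 0 1 1 + 25 * gg c (-1) 0 2 0), 0, 0, 0, 0]) y"
    by (intro allI, simp add: Gx, (algebra)?)
  have c0_0: "(20 * gg c (-1) 1 0 1 + 400 * gg c (-1) 0 0 2 + 5 * gg c (-1) 1 1 0 + 100 * gg c (-1) 0 1 1 + 25 * gg c (-1) 0 2 0) = 0"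
    using gammaL[OF fin pres _ _ _ eq0, of 0] by (simp add: nth_default_def eval_nat_numeral)
  have eq1: "\<forall>y. Gf c (-1) 2 (0 + 1*y + 0*y^2) (0*real 5 + 1*y*(real 5 - 1) + 0*y^2*(real 5 - 2)) (0*(real 5*(real 5 - 1)) + 1*y*((real 5 - 1)*(real 5 - 2)) + 0*y^2*((real 5 - 2)*(real 5 - 3))) = poly (Poly [0, 0, (12 * gg c (-1) 1 0 1 + 144 * gg c (-1) 0 0 2 + 4 * gg c (-1) 1 1 0 + 48 * gg c (-1) 0 1 1 + 16 * gg c (-1) 0 2 0), 0, 0]) y"
    by (intro allI, simp add: Gx, (algebra)?)
  have c1_2: "(12 * gg c (-1) 1 0 1 + 144 * gg c (-1) 0 0 2 + 4 * gg c (-1) 1 1 0 + 48 * gg c (-1) 0 1 1 + 16 * gg c (-1) 0 2 0) = 0"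
    using gammaL[OF fin pres _ _ _ eq1, of 2] by (simp add: nth_default_def eval_nat_numeral)
  have eq2: "\<forall>y. Gf c (-1) 2 (1 + 1*y + 0*y^2) (1*real 5 + 1*y*(real 5 - 1) + 0*y^2*(real 5 - 2)) (1*(real 5*(real 5 - 1)) + 1*y*((real 5 - 1)*(real 5 - 2)) + 0*y^2*((real 5 - 2)*(real 5 - 3))) = poly (Poly [(20 * gg c (-1) 1 0 1 + 400 * gg c (-1) 0 0 2 + 5 * gg c (-1) 1 1 0 + 100 * gg c (-1) 0 1 1 + 25 * gg c (-1) 0 2 0), (32 * gg c (-1) 1 0 1 + 480 * gg c (-1) 0 0 2 + 9 * gg c (-1) 1 1 0 + 140 * gg c (-1) 0 1 1 + 40 * gg c (-1) 0 2 0), (12 * gg c (-1) 1 0 1 + 144 * gg c (-1) 0 0 2 + 4 * gg c (-1) 1 1 0 + 48 * gg c (-1) 0 1 1 + 16 * gg c (-1) 0 2 0), 0, 0]) y"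
    by (intro allI, simp add: Gx, (algebra)?)
  have c2_0: "(20 * gg c (-1) 1 0 1 + 400 * gg c (-1) 0 0 2 + 5 * gg c (-1) 1 1 0 + 100 * gg c (-1) 0 1 1 + 25 * gg c (-1) 0 2 0) = 0"
    using gammaL[OF fin pres _ _ _ eq2, of 0] by (simp add: nth_default_def eval_nat_numeral)
  have c2_1: "(32 * gg c (-1) 1 0 1 + 480 * gg c (-1) 0 0 2 + 9 * gg c (-1) 1 1 0 + 140 * gg c (-1) 0 1 1 + 40 * gg c (-1) 0 2 0) = 0"
    using gammaL[OF fin pres _ _ _ eq2, of 1] by (simp add: nth_default_def eval_nat_numeral)
  have c2_2: "(12 * gg c (-1) 1 0 1 + 144 * gg c (-1) 0 0 2 + 4 * gg c (-1) 1 1 0 + 48 * gg c (-1) 0 1 1 + 16 * gg c (-1) 0 2 0) = 0"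
    using gammaL[OF fin pres _ _ _ eq2, of 2] by (simp add: nth_default_def eval_nat_numeral)
  have eq3: "\<forall>y. Gf c (-1) 2 (1 + 0*y + 1*y^2) (1*real 5 + 0*y*(real 5 - 1) + 1*y^2*(real 5 - 2)) (1*(real 5*(real 5 - 1)) + 0*y*((real 5 - 1)*(real 5 - 2)) + 1*y^2*((real 5 - 2)*(real 5 - 3))) = poly (Poly [(20 * gg c (-1) 1 0 1 + 400 * gg c (-1) 0 0 2 + 5 * gg c (-1) 1 1 0 + 100 * gg c (-1) 0 1 1 + 25 * gg c (-1) 0 2 0), 0, (26 * gg c (-1) 1 0 1 + 240 * gg c (-1) 0 0 2 + 8 * gg c (-1) 1 1 0 + 90 * gg c (-1) 0 1 1 + 30 * gg c (-1) 0 2 0), 0, (6 * gg c (-1) 1 0 1 + 36 * gg c (-1) 0 0 2 + 3 * gg c (-1) 1 1 0 + 18 * gg c (-1) 0 1 1 + 9 * gg c (-1) 0 2 0)]) y"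
    by (intro allI, simp add: Gx, (algebra)?)
  have c3_0: "(20 * gg c (-1) 1 0 1 + 400 * gg c (-1) 0 0 2 + 5 * gg c (-1) 1 1 0 + 100 * gg c (-1) 0 1 1 + 25 * gg c (-1) 0 2 0) = 0"
    using gammaL[OF fin pres _ _ _ eq3, of 0] by (simp add: nth_default_def eval_nat_numeral)
  have c3_2: "(26 * gg c (-1) 1 0 1 + 240 * gg c (-1) 0 0 2 + 8 * gg c (-1) 1 1 0 + 90 * gg c (-1) 0 1 1 + 30 * gg c (-1) 0 2 0) = 0"
    using gammaL[OF fin pres _ _ _ eq3, of 2] by (simp add: nth_default_def eval_nat_numeral)
  have eq4: "\<forall>y. Gf c (-1) 2 (0 + 1*y + 1*y^2) (0*real 5 + 1*y*(real 5 - 1) + 1*y^2*(real 5 - 2)) (0*(real 5*(real 5 - 1)) + 1*y*((real 5 - 1)*(real 5 - 2)) + 1*y^2*((real 5 - 2)*(real 5 - 3))) = poly (Poly [0, 0, (12 * gg c (-1) 1 0 1 + 144 * gg c (-1) 0 0 2 + 4 * gg c (-1) 1 1 0 + 48 * gg c (-1) 0 1 1 + 16 * gg c (-1) 0 2 0), (18 * gg c (-1) 1 0 1 + 144 * gg c (-1) 0 0 2 + 7 * gg c (-1) 1 1 0 + 60 * gg c (-1) 0 1 1 + 24 * gg c (-1) 0 2 0), (6 * gg c (-1) 1 0 1 + 36 * gg c (-1) 0 0 2 + 3 * gg c (-1) 1 1 0 + 18 * gg c (-1) 0 1 1 + 9 * gg c (-1) 0 2 0)]) y"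
    by (intro allI, simp add: Gx, (algebra)?)
  have c4_2: "(12 * gg c (-1) 1 0 1 + 144 * gg c (-1) 0 0 2 + 4 * gg c (-1) 1 1 0 + 48 * gg c (-1) 0 1 1 + 16 * gg c (-1) 0 2 0) = 0"
    using gammaL[OF fin pres _ _ _ eq4, of 2] by (simp add: nth_default_def eval_nat_numeral)
  have c4_3: "(18 * gg c (-1) 1 0 1 + 144 * gg c (-1) 0 0 2 + 7 * gg c (-1) 1 1 0 + 60 * gg c (-1) 0 1 1 + 24 * gg c (-1) 0 2 0) = 0"
    using gammaL[OF fin pres _ _ _ eq4, of 3] by (simp add: nth_default_def eval_nat_numeral)
  have mem2: "(i,j,k) \<in> set [(1,0,1),(0,0,2),(1,1,0),(0,1,1),(0,2,0)]" using mem by (simp only: AlX)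
  have z0: "gg c (-1) 1 0 1 = 0" using c0_0 c1_2 c2_0 c2_1 c2_2 c3_0 c3_2 c4_2 c4_3 by linarith
  have z1: "gg c (-1) 0 0 2 = 0" using c0_0 c1_2 c2_0 c2_1 c2_2 c3_0 c3_2 c4_2 c4_3 by linarith
  have z2: "gg c (-1) 1 1 0 = 0" using c0_0 c1_2 c2_0 c2_1 c2_2 c3_0 c3_2 c4_2 c4_3 by linarith
  have z3: "gg c (-1) 0 1 1 = 0" using c0_0 c1_2 c2_0 c2_1 c2_2 c3_0 c3_2 c4_2 c4_3 by linarith
  have z4: "gg c (-1) 0 2 0 = 0" using c0_0 c1_2 c2_0 c2_1 c2_2 c3_0 c3_2 c4_2 c4_3 by linarith
  show ?thesis using mem2 z0 z1 z2 z3 z4 by auto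
qed

lemma hard_5_2_2:
  assumes fin: "opoly_finite c" and pres: "preserves_Pn c 5" and mem: "(i,j,k) \<in> set (Al 2 (-2))"
  shows "gg c (-2) i j k = 0"
proof -
  have AlX: "Al 2 (-2) = [(1,0,1),(0,0,2),(0,1,1),(0,2,0)]" by (simp add: Al_def upt_rec)
  have Gx: "Gf c (-2) 2 U0 U1 U2 = gg c (-2) 1 0 1 * U0 * U2 + gg c (-2) 0 0 2 * U2^2 + gg c (-2) 0 1 1 * U1 * U2 + gg c (-2) 0 2 0 * U1^2" for U0 U1 U2
    by (simp add: Gf_reindex AlX algebra_simps)
  have eq0: "\<forall>y. Gf c (-2) 2 (1 + 0*y + 0*y^2) (1*real 5 + 0*y*(real 5 - 1) + 0*y^2*(real 5 - 2)) (1*(real 5*(real 5 - 1)) + 0*y*((real 5 - 1)*(real 5 - 2)) + 0*y^2*((real 5 - 2)*(real 5 - 3))) = poly (Poly [(20 * gg c (-2) 1 0 1 + 400 * gg c (-2) 0 0 2 + 100 * gg c (-2) 0 1 1 + 25 * gg c (-2) 0 2 0), 0, 0, 0, 0]) y"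
    by (intro allI, simp add: Gx, (algebra)?)
  have c0_0: "(20 * gg c (-2) 1 0 1 + 400 * gg c (-2) 0 0 2 + 100 * gg c (-2) 0 1 1 + 25 * gg c (-2) 0 2 0) = 0"
    using gammaL[OF fin pres _ _ _ eq0, of 0] by (simp add: nth_default_def eval_nat_numeral)
  have eq1: "\<forall>y. Gf c (-2) 2 (0 + 1*y + 0*y^2) (0*real 5 + 1*y*(real 5 - 1) + 0*y^2*(real 5 - 2)) (0*(real 5*(real 5 - 1)) + 1*y*((real 5 - 1)*(real 5 - 2)) + 0*y^2*((real 5 - 2)*(real 5 - 3))) = poly (Poly [0, 0, (12 * gg c (-2) 1 0 1 + 144 * gg c (-2) 0 0 2 + 48 * gg c (-2) 0 1 1 + 16 * gg c (-2) 0 2 0), 0, 0]) y"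
    by (intro allI, simp add: Gx, (algebra)?)
  have c1_2: "(12 * gg c (-2) 1 0 1 + 144 * gg c (-2) 0 0 2 + 48 * gg c (-2) 0 1 1 + 16 * gg c (-2) 0 2 0) = 0"
    using gammaL[OF fin pres _ _ _ eq1, of 2] by (simp add: nth_default_def eval_nat_numeral)
  have eq2: "\<forall>y. Gf c (-2) 2 (1 + 1*y + 0*y^2) (1*real 5 + 1*y*(real 5 - 1) + 0*y^2*(real 5 - 2)) (1*(real 5*(real 5 - 1)) + 1*y*((real 5 - 1)*(real 5 - 2)) + 0*y^2*((real 5 - 2)*(real 5 - 3))) = poly (Poly [(20 * gg c (-2) 1 0 1 + 400 * gg c (-2) 0 0 2 + 100 * gg c (-2) 0 1 1 + 25 * gg c (-2) 0 2 0), (32 * gg c (-2) 1 0 1 + 480 * gg c (-2) 0 0 2 + 140 * gg c (-2) 0 1 1 + 40 * gg c (-2) 0 2 0), (12 * gg c (-2) 1 0 1 + 144 * gg c (-2) 0 0 2 + 48 * gg c (-2) 0 1 1 + 16 * gg c (-2) 0 2 0), 0, 0]) y"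
    by (intro allI, simp add: Gx, (algebra)?)
  have c2_0: "(20 * gg c (-2) 1 0 1 + 400 * gg c (-2) 0 0 2 + 100 * gg c (-2) 0 1 1 + 25 * gg c (-2) 0 2 0) = 0"
    using gammaL[OF fin pres _ _ _ eq2, of 0] by (simp add: nth_default_def eval_nat_numeral)
  have c2_1: "(32 * gg c (-2) 1 0 1 + 480 * gg c (-2) 0 0 2 + 140 * gg c (-2) 0 1 1 + 40 * gg c (-2) 0 2 0) = 0"
    using gammaL[OF fin pres _ _ _ eq2, of 1] by (simp add: nth_default_def eval_nat_numeral)
  have c2_2: "(12 * gg c (-2) 1 0 1 + 144 * gg c (-2) 0 0 2 + 48 * gg c (-2) 0 1 1 + 16 * gg c (-2) 0 2 0) = 0"
    using gammaL[OF fin pres _ _ _ eq2, of 2] by (simp add: nth_default_def eval_nat_numeral)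
  have eq3: "\<forall>y. Gf c (-2) 2 (1 + 0*y + 1*y^2) (1*real 5 + 0*y*(real 5 - 1) + 1*y^2*(real 5 - 2)) (1*(real 5*(real 5 - 1)) + 0*y*((real 5 - 1)*(real 5 - 2)) + 1*y^2*((real 5 - 2)*(real 5 - 3))) = poly (Poly [(20 * gg c (-2) 1 0 1 + 400 * gg c (-2) 0 0 2 + 100 * gg c (-2) 0 1 1 + 25 * gg c (-2) 0 2 0), 0, (26 * gg c (-2) 1 0 1 + 240 * gg c (-2) 0 0 2 + 90 * gg c (-2) 0 1 1 + 30 * gg c (-2) 0 2 0), 0, (6 * gg c (-2) 1 0 1 + 36 * gg c (-2) 0 0 2 + 18 * gg c (-2) 0 1 1 + 9 * gg c (-2) 0 2 0)]) y"
    by (intro allI, simp add: Gx, (algebra)?)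
  have c3_0: "(20 * gg c (-2) 1 0 1 + 400 * gg c (-2) 0 0 2 + 100 * gg c (-2) 0 1 1 + 25 * gg c (-2) 0 2 0) = 0"
    using gammaL[OF fin pres _ _ _ eq3, of 0] by (simp add: nth_default_def eval_nat_numeral)
  have c3_2: "(26 * gg c (-2) 1 0 1 + 240 * gg c (-2) 0 0 2 + 90 * gg c (-2) 0 1 1 + 30 * gg c (-2) 0 2 0) = 0"
    using gammaL[OF fin pres _ _ _ eq3, of 2] by (simp add: nth_default_def eval_nat_numeral)
  have mem2: "(i,j,k) \<in> set [(1,0,1),(0,0,2),(0,1,1),(0,2,0)]" using mem by (simp only: AlX)
  have z0: "gg c (-2) 1 0 1 = 0" using c0_0 c1_2 c2_0 c2_1 c2_2 c3_0 c3_2 by linarith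
  have z1: "gg c (-2) 0 0 2 = 0" using c0_0 c1_2 c2_0 c2_1 c2_2 c3_0 c3_2 by linarith
  have z2: "gg c (-2) 0 1 1 = 0" using c0_0 c1_2 c2_0 c2_1 c2_2 c3_0 c3_2 by linarith
  have z3: "gg c (-2) 0 2 0 = 0" using c0_0 c1_2 c2_0 c2_1 c2_2 c3_0 c3_2 by linarith
  show ?thesis using mem2 z0 z1 z2 z3 by auto
qed

lemma hard_5_2_3:
  assumes fin: "opoly_finite c" and pres: "preserves_Pn c 5" and mem: "(i,j,k) \<in> set (Al 2 (-3))"
  shows "gg c (-3) i j k = 0"
proof -
  have AlX: "Al 2 (-3) = [(0,0,2),(0,1,1)]" by (simp add: Al_def upt_rec)
  have Gx: "Gf c (-3) 2 U0 U1 U2 = gg c (-3) 0 0 2 * U2^2 + gg c (-3) 0 1 1 * U1 * U2" for U0 U1 U2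
    by (simp add: Gf_reindex AlX algebra_simps)
  have eq0: "\<forall>y. Gf c (-3) 2 (1 + 0*y + 0*y^2) (1*real 5 + 0*y*(real 5 - 1) + 0*y^2*(real 5 - 2)) (1*(real 5*(real 5 - 1)) + 0*y*((real 5 - 1)*(real 5 - 2)) + 0*y^2*((real 5 - 2)*(real 5 - 3))) = poly (Poly [(400 * gg c (-3) 0 0 2 + 100 * gg c (-3) 0 1 1), 0, 0, 0, 0]) y"
    by (intro allI, simp add: Gx, (algebra)?)
  have c0_0: "(400 * gg c (-3) 0 0 2 + 100 * gg c (-3) 0 1 1) = 0"
    using gammaL[OF fin pres _ _ _ eq0, of 0] by (simp add: nth_default_def eval_nat_numeral)
  have eq1: "\<forall>y. Gf c (-3) 2 (1 + 1*y + 0*y^2) (1*real 5 + 1*y*(real 5 - 1) + 0*y^2*(real 5 - 2)) (1*(real 5*(real 5 - 1)) + 1*y*((real 5 - 1)*(real 5 - 2)) + 0*y^2*((real 5 - 2)*(real 5 - 3))) = poly (Poly [(400 * gg c (-3) 0 0 2 + 100 * gg c (-3) 0 1 1), (480 * gg c (-3) 0 0 2 + 140 * gg c (-3) 0 1 1), (144 * gg c (-3) 0 0 2 + 48 * gg c (-3) 0 1 1), 0, 0]) y"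
    by (intro allI, simp add: Gx, (algebra)?)
  have c1_0: "(400 * gg c (-3) 0 0 2 + 100 * gg c (-3) 0 1 1) = 0"
    using gammaL[OF fin pres _ _ _ eq1, of 0] by (simp add: nth_default_def eval_nat_numeral)
  have c1_1: "(480 * gg c (-3) 0 0 2 + 140 * gg c (-3) 0 1 1) = 0"
    using gammaL[OF fin pres _ _ _ eq1, of 1] by (simp add: nth_default_def eval_nat_numeral)
  have mem2: "(i,j,k) \<in> set [(0,0,2),(0,1,1)]" using mem by (simp only: AlX)
  have z0: "gg c (-3) 0 0 2 = 0" using c0_0 c1_0 c1_1 by linarith
  have z1: "gg c (-3) 0 1 1 = 0" using c0_0 c1_0 c1_1 by linarith
  show ?thesis using mem2 z0 z1 by auto
qed

lemma hard_5_2_4: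
  assumes fin: "opoly_finite c" and pres: "preserves_Pn c 5" and mem: "(i,j,k) \<in> set (Al 2 (-4))"
  shows "gg c (-4) i j k = 0"
proof -
  have AlX: "Al 2 (-4) = [(0,0,2)]" by (simp add: Al_def upt_rec)
  have Gx: "Gf c (-4) 2 U0 U1 U2 = gg c (-4) 0 0 2 * U2^2" for U0 U1 U2
    by (simp add: Gf_reindex AlX algebra_simps)
  have eq0: "\<forall>y. Gf c (-4) 2 (1 + 0*y + 0*y^2) (1*real 5 + 0*y*(real 5 - 1) + 0*y^2*(real 5 - 2)) (1*(real 5*(real 5 - 1)) + 0*y*((real 5 - 1)*(real 5 - 2)) + 0*y^2*((real 5 - 2)*(real 5 - 3))) = poly (Poly [(400 * gg c (-4) 0 0 2), 0, 0, 0, 0]) y"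
    by (intro allI, simp add: Gx, (algebra)?)
  have c0_0: "(400 * gg c (-4) 0 0 2) = 0"
    using gammaL[OF fin pres _ _ _ eq0, of 0] by (simp add: nth_default_def eval_nat_numeral)
  have mem2: "(i,j,k) \<in> set [(0,0,2)]" using mem by (simp only: AlX)
  have z0: "gg c (-4) 0 0 2 = 0" using c0_0 by linarith
  show ?thesis using mem2 z0 by auto
qed

lemma hard_5_3_4:
  assumes fin: "opoly_finite c" and pres: "preserves_Pn c 5" and mem: "(i,j,k) \<in> set (Al 3 (-4))"
  shows "gg c (-4) i j k = 0"
proof -
  have AlX: "Al 3 (-4) = [(1,0,2),(0,0,3),(0,1,2),(0,2,1)]" by (simp add: Al_def upt_rec)
  have Gx: "Gf c (-4) 3 U0 U1 U2 = gg c (-4) 1 0 2 * U0 * U2^2 + gg c (-4) 0 0 3 * U2^3 + gg c (-4) 0 1 2 * U1 * U2^2 + gg c (-4) 0 2 1 * U1^2 * U2" for U0 U1 U2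
    by (simp add: Gf_reindex AlX algebra_simps)
  have eq0: "\<forall>y. Gf c (-4) 3 (1 + 0*y + 0*y^2) (1*real 5 + 0*y*(real 5 - 1) + 0*y^2*(real 5 - 2)) (1*(real 5*(real 5 - 1)) + 0*y*((real 5 - 1)*(real 5 - 2)) + 0*y^2*((real 5 - 2)*(real 5 - 3))) = poly (Poly [(400 * gg c (-4) 1 0 2 + 8000 * gg c (-4) 0 0 3 + 2000 * gg c (-4) 0 1 2 + 500 * gg c (-4) 0 2 1), 0, 0, 0, 0, 0, 0]) y"
    by (intro allI, simp add: Gx, (algebra)?)
  have c0_0: "(400 * gg c (-4) 1 0 2 + 8000 * gg c (-4) 0 0 3 + 2000 * gg c (-4) 0 1 2 + 500 * gg c (-4) 0 2 1) = 0"
    using gammaL[OF fin pres _ _ _ eq0, of 0] by (simp add: nth_default_def eval_nat_numeral)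
  have eq1: "\<forall>y. Gf c (-4) 3 (0 + 1*y + 0*y^2) (0*real 5 + 1*y*(real 5 - 1) + 0*y^2*(real 5 - 2)) (0*(real 5*(real 5 - 1)) + 1*y*((real 5 - 1)*(real 5 - 2)) + 0*y^2*((real 5 - 2)*(real 5 - 3))) = poly (Poly [0, 0, 0, (144 * gg c (-4) 1 0 2 + 1728 * gg c (-4) 0 0 3 + 576 * gg c (-4) 0 1 2 + 192 * gg c (-4) 0 2 1), 0, 0, 0]) y"
    by (intro allI, simp add: Gx, (algebra)?)
  have c1_3: "(144 * gg c (-4) 1 0 2 + 1728 * gg c (-4) 0 0 3 + 576 * gg c (-4) 0 1 2 + 192 * gg c (-4) 0 2 1) = 0"
    using gammaL[OF fin pres _ _ _ eq1, of 3] by (simp add: nth_default_def eval_nat_numeral)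
  have eq2: "\<forall>y. Gf c (-4) 3 (1 + 1*y + 0*y^2) (1*real 5 + 1*y*(real 5 - 1) + 0*y^2*(real 5 - 2)) (1*(real 5*(real 5 - 1)) + 1*y*((real 5 - 1)*(real 5 - 2)) + 0*y^2*((real 5 - 2)*(real 5 - 3))) = poly (Poly [(400 * gg c (-4) 1 0 2 + 8000 * gg c (-4) 0 0 3 + 2000 * gg c (-4) 0 1 2 + 500 * gg c (-4) 0 2 1), (880 * gg c (-4) 1 0 2 + 14400 * gg c (-4) 0 0 3 + 4000 * gg c (-4) 0 1 2 + 1100 * gg c (-4) 0 2 1), (624 * gg c (-4) 1 0 2 + 8640 * gg c (-4) 0 0 3 + 2640 * gg c (-4) 0 1 2 + 800 * gg c (-4) 0 2 1), (144 * gg c (-4) 1 0 2 + 1728 * gg c (-4) 0 0 3 + 576 * gg c (-4) 0 1 2 + 192 * gg c (-4) 0 2 1), 0, 0, 0]) y"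
    by (intro allI, simp add: Gx, (algebra)?)
  have c2_0: "(400 * gg c (-4) 1 0 2 + 8000 * gg c (-4) 0 0 3 + 2000 * gg c (-4) 0 1 2 + 500 * gg c (-4) 0 2 1) = 0"
    using gammaL[OF fin pres _ _ _ eq2, of 0] by (simp add: nth_default_def eval_nat_numeral)
  have c2_1: "(880 * gg c (-4) 1 0 2 + 14400 * gg c (-4) 0 0 3 + 4000 * gg c (-4) 0 1 2 + 1100 * gg c (-4) 0 2 1) = 0"
    using gammaL[OF fin pres _ _ _ eq2, of 1] by (simp add: nth_default_def eval_nat_numeral)
  have c2_2: "(624 * gg c (-4) 1 0 2 + 8640 * gg c (-4) 0 0 3 + 2640 * gg c (-4) 0 1 2 + 800 * gg c (-4) 0 2 1) = 0"
    using gammaL[OF fin pres _ _ _ eq2, of 2] by (simp add: nth_default_def eval_nat_numeral)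
  have c2_3: "(144 * gg c (-4) 1 0 2 + 1728 * gg c (-4) 0 0 3 + 576 * gg c (-4) 0 1 2 + 192 * gg c (-4) 0 2 1) = 0"
    using gammaL[OF fin pres _ _ _ eq2, of 3] by (simp add: nth_default_def eval_nat_numeral)
  have eq3: "\<forall>y. Gf c (-4) 3 (1 + 0*y + 1*y^2) (1*real 5 + 0*y*(real 5 - 1) + 1*y^2*(real 5 - 2)) (1*(real 5*(real 5 - 1)) + 0*y*((real 5 - 1)*(real 5 - 2)) + 1*y^2*((real 5 - 2)*(real 5 - 3))) = poly (Poly [(400 * gg c (-4) 1 0 2 + 8000 * gg c (-4) 0 0 3 + 2000 * gg c (-4) 0 1 2 + 500 * gg c (-4) 0 2 1), 0, (640 * gg c (-4) 1 0 2 + 7200 * gg c (-4) 0 0 3 + 2400 * gg c (-4) 0 1 2 + 750 * gg c (-4) 0 2 1), 0, (276 * gg c (-4) 1 0 2 + 2160 * gg c (-4) 0 0 3 + 900 * gg c (-4) 0 1 2 + 360 * gg c (-4) 0 2 1), 0, (36 * gg c (-4) 1 0 2 + 216 * gg c (-4) 0 0 3 + 108 * gg c (-4) 0 1 2 + 54 * gg c (-4) 0 2 1)]) y"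
    by (intro allI, simp add: Gx, (algebra)?)
  have c3_0: "(400 * gg c (-4) 1 0 2 + 8000 * gg c (-4) 0 0 3 + 2000 * gg c (-4) 0 1 2 + 500 * gg c (-4) 0 2 1) = 0"
    using gammaL[OF fin pres _ _ _ eq3, of 0] by (simp add: nth_default_def eval_nat_numeral)
  have c3_2: "(640 * gg c (-4) 1 0 2 + 7200 * gg c (-4) 0 0 3 + 2400 * gg c (-4) 0 1 2 + 750 * gg c (-4) 0 2 1) = 0"
    using gammaL[OF fin pres _ _ _ eq3, of 2] by (simp add: nth_default_def eval_nat_numeral)
  have c3_4: "(276 * gg c (-4) 1 0 2 + 2160 * gg c (-4) 0 0 3 + 900 * gg c (-4) 0 1 2 + 360 * gg c (-4) 0 2 1) = 0"
    using gammaL[OF fin pres _ _ _ eq3, of 4] by (simp add: nth_default_def eval_nat_numeral)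
  have mem2: "(i,j,k) \<in> set [(1,0,2),(0,0,3),(0,1,2),(0,2,1)]" using mem by (simp only: AlX)
  have z0: "gg c (-4) 1 0 2 = 0" using c0_0 c1_3 c2_0 c2_1 c2_2 c2_3 c3_0 c3_2 c3_4 by linarith
  have z1: "gg c (-4) 0 0 3 = 0" using c0_0 c1_3 c2_0 c2_1 c2_2 c2_3 c3_0 c3_2 c3_4 by linarith
  have z2: "gg c (-4) 0 1 2 = 0" using c0_0 c1_3 c2_0 c2_1 c2_2 c2_3 c3_0 c3_2 c3_4 by linarith
  have z3: "gg c (-4) 0 2 1 = 0" using c0_0 c1_3 c2_0 c2_1 c2_2 c2_3 c3_0 c3_2 c3_4 by linarith
  show ?thesis using mem2 z0 z1 z2 z3 by auto
qed

lemma hard_5_3_5: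
  assumes fin: "opoly_finite c" and pres: "preserves_Pn c 5" and mem: "(i,j,k) \<in> set (Al 3 (-5))"
  shows "gg c (-5) i j k = 0"
proof -
  have AlX: "Al 3 (-5) = [(0,0,3),(0,1,2)]" by (simp add: Al_def upt_rec)
  have Gx: "Gf c (-5) 3 U0 U1 U2 = gg c (-5) 0 0 3 * U2^3 + gg c (-5) 0 1 2 * U1 * U2^2" for U0 U1 U2
    by (simp add: Gf_reindex AlX algebra_simps)
  have eq0: "\<forall>y. Gf c (-5) 3 (1 + 0*y + 0*y^2) (1*real 5 + 0*y*(real 5 - 1) + 0*y^2*(real 5 - 2)) (1*(real 5*(real 5 - 1)) + 0*y*((real 5 - 1)*(real 5 - 2)) + 0*y^2*((real 5 - 2)*(real 5 - 3))) = poly (Poly [(8000 * gg c (-5) 0 0 3 + 2000 * gg c (-5) 0 1 2), 0, 0, 0, 0, 0, 0]) y"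
    by (intro allI, simp add: Gx, (algebra)?)
  have c0_0: "(8000 * gg c (-5) 0 0 3 + 2000 * gg c (-5) 0 1 2) = 0"
    using gammaL[OF fin pres _ _ _ eq0, of 0] by (simp add: nth_default_def eval_nat_numeral)
  have eq1: "\<forall>y. Gf c (-5) 3 (0 + 1*y + 0*y^2) (0*real 5 + 1*y*(real 5 - 1) + 0*y^2*(real 5 - 2)) (0*(real 5*(real 5 - 1)) + 1*y*((real 5 - 1)*(real 5 - 2)) + 0*y^2*((real 5 - 2)*(real 5 - 3))) = poly (Poly [0, 0, 0, (1728 * gg c (-5) 0 0 3 + 576 * gg c (-5) 0 1 2), 0, 0, 0]) y"
    by (intro allI, simp add: Gx, (algebra)?)
  have c1_3: "(1728 * gg c (-5) 0 0 3 + 576 * gg c (-5) 0 1 2) = 0"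
    using gammaL[OF fin pres _ _ _ eq1, of 3] by (simp add: nth_default_def eval_nat_numeral)
  have mem2: "(i,j,k) \<in> set [(0,0,3),(0,1,2)]" using mem by (simp only: AlX)
  have z0: "gg c (-5) 0 0 3 = 0" using c0_0 c1_3 by linarith
  have z1: "gg c (-5) 0 1 2 = 0" using c0_0 c1_3 by linarith
  show ?thesis using mem2 z0 z1 by auto
qed

lemma hard_5_3_6:
  assumes fin: "opoly_finite c" and pres: "preserves_Pn c 5" and mem: "(i,j,k) \<in> set (Al 3 (-6))"
  shows "gg c (-6) i j k = 0"
proof -
  have AlX: "Al 3 (-6) = [(0,0,3)]" by (simp add: Al_def upt_rec)
  have Gx: "Gf c (-6) 3 U0 U1 U2 = gg c (-6) 0 0 3 * U2^3" for U0 U1 U2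
    by (simp add: Gf_reindex AlX algebra_simps)
  have eq0: "\<forall>y. Gf c (-6) 3 (1 + 0*y + 0*y^2) (1*real 5 + 0*y*(real 5 - 1) + 0*y^2*(real 5 - 2)) (1*(real 5*(real 5 - 1)) + 0*y*((real 5 - 1)*(real 5 - 2)) + 0*y^2*((real 5 - 2)*(real 5 - 3))) = poly (Poly [(8000 * gg c (-6) 0 0 3), 0, 0, 0, 0, 0, 0]) y"
    by (intro allI, simp add: Gx, (algebra)?)
  have c0_0: "(8000 * gg c (-6) 0 0 3) = 0"
    using gammaL[OF fin pres _ _ _ eq0, of 0] by (simp add: nth_default_def eval_nat_numeral)
  have mem2: "(i,j,k) \<in> set [(0,0,3)]" using mem by (simp only: AlX)
  have z0: "gg c (-6) 0 0 3 = 0" using c0_0 by linarith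
  show ?thesis using mem2 z0 by auto
qed

lemma hard_5_4_7:
  assumes fin: "opoly_finite c" and pres: "preserves_Pn c 5" and mem: "(i,j,k) \<in> set (Al 4 (-7))"
  shows "gg c (-7) i j k = 0"
proof -
  have AlX: "Al 4 (-7) = [(0,0,4),(0,1,3)]" by (simp add: Al_def upt_rec)
  have Gx: "Gf c (-7) 4 U0 U1 U2 = gg c (-7) 0 0 4 * U2^4 + gg c (-7) 0 1 3 * U1 * U2^3" for U0 U1 U2
    by (simp add: Gf_reindex AlX algebra_simps)
  have eq0: "\<forall>y. Gf c (-7) 4 (1 + 0*y + 0*y^2) (1*real 5 + 0*y*(real 5 - 1) + 0*y^2*(real 5 - 2)) (1*(real 5*(real 5 - 1)) + 0*y*((real 5 - 1)*(real 5 - 2)) + 0*y^2*((real 5 - 2)*(real 5 - 3))) = poly (Poly [(160000 * gg c (-7) 0 0 4 + 40000 * gg c (-7) 0 1 3), 0, 0, 0, 0, 0, 0, 0, 0]) y"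
    by (intro allI, simp add: Gx, (algebra)?)
  have c0_0: "(160000 * gg c (-7) 0 0 4 + 40000 * gg c (-7) 0 1 3) = 0"
    using gammaL[OF fin pres _ _ _ eq0, of 0] by (simp add: nth_default_def eval_nat_numeral)
  have eq1: "\<forall>y. Gf c (-7) 4 (0 + 1*y + 0*y^2) (0*real 5 + 1*y*(real 5 - 1) + 0*y^2*(real 5 - 2)) (0*(real 5*(real 5 - 1)) + 1*y*((real 5 - 1)*(real 5 - 2)) + 0*y^2*((real 5 - 2)*(real 5 - 3))) = poly (Poly [0, 0, 0, 0, (20736 * gg c (-7) 0 0 4 + 6912 * gg c (-7) 0 1 3), 0, 0, 0, 0]) y"
    by (intro allI, simp add: Gx, (algebra)?)
  have c1_4: "(20736 * gg c (-7) 0 0 4 + 6912 * gg c (-7) 0 1 3) = 0"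
    using gammaL[OF fin pres _ _ _ eq1, of 4] by (simp add: nth_default_def eval_nat_numeral)
  have mem2: "(i,j,k) \<in> set [(0,0,4),(0,1,3)]" using mem by (simp only: AlX)
  have z0: "gg c (-7) 0 0 4 = 0" using c0_0 c1_4 by linarith
  have z1: "gg c (-7) 0 1 3 = 0" using c0_0 c1_4 by linarith
  show ?thesis using mem2 z0 z1 by auto
qed

lemma hard_5_4_8:
  assumes fin: "opoly_finite c" and pres: "preserves_Pn c 5" and mem: "(i,j,k) \<in> set (Al 4 (-8))"
  shows "gg c (-8) i j k = 0"
proof -
  have AlX: "Al 4 (-8) = [(0,0,4)]" by (simp add: Al_def upt_rec)
  have Gx: "Gf c (-8) 4 U0 U1 U2 = gg c (-8) 0 0 4 * U2^4" for U0 U1 U2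
    by (simp add: Gf_reindex AlX algebra_simps)
  have eq0: "\<forall>y. Gf c (-8) 4 (1 + 0*y + 0*y^2) (1*real 5 + 0*y*(real 5 - 1) + 0*y^2*(real 5 - 2)) (1*(real 5*(real 5 - 1)) + 0*y*((real 5 - 1)*(real 5 - 2)) + 0*y^2*((real 5 - 2)*(real 5 - 3))) = poly (Poly [(160000 * gg c (-8) 0 0 4), 0, 0, 0, 0, 0, 0, 0, 0]) y"
    by (intro allI, simp add: Gx, (algebra)?)
  have c0_0: "(160000 * gg c (-8) 0 0 4) = 0"
    using gammaL[OF fin pres _ _ _ eq0, of 0] by (simp add: nth_default_def eval_nat_numeral)
  have mem2: "(i,j,k) \<in> set [(0,0,4)]" using mem by (simp only: AlX)
  have z0: "gg c (-8) 0 0 4 = 0" using c0_0 by linarith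
  show ?thesis using mem2 z0 by auto
qed

lemma hard_5_5_10:
  assumes fin: "opoly_finite c" and pres: "preserves_Pn c 5" and mem: "(i,j,k) \<in> set (Al 5 (-10))"
  shows "gg c (-10) i j k = 0"
proof -
  have AlX: "Al 5 (-10) = [(0,0,5)]" by (simp add: Al_def upt_rec)
  have Gx: "Gf c (-10) 5 U0 U1 U2 = gg c (-10) 0 0 5 * U2^5" for U0 U1 U2
    by (simp add: Gf_reindex AlX algebra_simps)
  have eq0: "\<forall>y. Gf c (-10) 5 (1 + 0*y + 0*y^2) (1*real 5 + 0*y*(real 5 - 1) + 0*y^2*(real 5 - 2)) (1*(real 5*(real 5 - 1)) + 0*y*((real 5 - 1)*(real 5 - 2)) + 0*y^2*((real 5 - 2)*(real 5 - 3))) = poly (Poly [(3200000 * gg c (-10) 0 0 5), 0, 0, 0, 0, 0, 0, 0, 0, 0, 0]) y"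
    by (intro allI, simp add: Gx, (algebra)?)
  have c0_0: "(3200000 * gg c (-10) 0 0 5) = 0"
    using gammaL[OF fin pres _ _ _ eq0, of 0] by (simp add: nth_default_def eval_nat_numeral)
  have mem2: "(i,j,k) \<in> set [(0,0,5)]" using mem by (simp only: AlX)
  have z0: "gg c (-10) 0 0 5 = 0" using c0_0 by linarith
  show ?thesis using mem2 z0 by auto
qed

lemma hard_6_2_2:
  assumes fin: "opoly_finite c" and pres: "preserves_Pn c 6" and mem: "(i,j,k) \<in> set (Al 2 (-2))"
  shows "gg c (-2) i j k = 0"
proof -
  have AlX: "Al 2 (-2) = [(1,0,1),(0,0,2),(0,1,1),(0,2,0)]" by (simp add: Al_def upt_rec)
  have Gx: "Gf c (-2) 2 U0 U1 U2 = gg c (-2) 1 0 1 * U0 * U2 + gg c (-2) 0 0 2 * U2^2 + gg c (-2) 0 1 1 * U1 * U2 + gg c (-2) 0 2 0 * U1^2" for U0 U1 U2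
    by (simp add: Gf_reindex AlX algebra_simps)
  have eq0: "\<forall>y. Gf c (-2) 2 (1 + 0*y + 0*y^2) (1*real 6 + 0*y*(real 6 - 1) + 0*y^2*(real 6 - 2)) (1*(real 6*(real 6 - 1)) + 0*y*((real 6 - 1)*(real 6 - 2)) + 0*y^2*((real 6 - 2)*(real 6 - 3))) = poly (Poly [(30 * gg c (-2) 1 0 1 + 900 * gg c (-2) 0 0 2 + 180 * gg c (-2) 0 1 1 + 36 * gg c (-2) 0 2 0), 0, 0, 0, 0]) y"
    by (intro allI, simp add: Gx, (algebra)?)
  have c0_0: "(30 * gg c (-2) 1 0 1 + 900 * gg c (-2) 0 0 2 + 180 * gg c (-2) 0 1 1 + 36 * gg c (-2) 0 2 0) = 0"
    using gammaL[OF fin pres _ _ _ eq0, of 0] by (simp add: nth_default_def eval_nat_numeral)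
  have eq1: "\<forall>y. Gf c (-2) 2 (0 + 1*y + 0*y^2) (0*real 6 + 1*y*(real 6 - 1) + 0*y^2*(real 6 - 2)) (0*(real 6*(real 6 - 1)) + 1*y*((real 6 - 1)*(real 6 - 2)) + 0*y^2*((real 6 - 2)*(real 6 - 3))) = poly (Poly [0, 0, (20 * gg c (-2) 1 0 1 + 400 * gg c (-2) 0 0 2 + 100 * gg c (-2) 0 1 1 + 25 * gg c (-2) 0 2 0), 0, 0]) y"
    by (intro allI, simp add: Gx, (algebra)?)
  have c1_2: "(20 * gg c (-2) 1 0 1 + 400 * gg c (-2) 0 0 2 + 100 * gg c (-2) 0 1 1 + 25 * gg c (-2) 0 2 0) = 0"
    using gammaL[OF fin pres _ _ _ eq1, of 2] by (simp add: nth_default_def eval_nat_numeral)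
  have eq2: "\<forall>y. Gf c (-2) 2 (1 + 1*y + 0*y^2) (1*real 6 + 1*y*(real 6 - 1) + 0*y^2*(real 6 - 2)) (1*(real 6*(real 6 - 1)) + 1*y*((real 6 - 1)*(real 6 - 2)) + 0*y^2*((real 6 - 2)*(real 6 - 3))) = poly (Poly [(30 * gg c (-2) 1 0 1 + 900 * gg c (-2) 0 0 2 + 180 * gg c (-2) 0 1 1 + 36 * gg c (-2) 0 2 0), (50 * gg c (-2) 1 0 1 + 1200 * gg c (-2) 0 0 2 + 270 * gg c (-2) 0 1 1 + 60 * gg c (-2) 0 2 0), (20 * gg c (-2) 1 0 1 + 400 * gg c (-2) 0 0 2 + 100 * gg c (-2) 0 1 1 + 25 * gg c (-2) 0 2 0), 0, 0]) y"
    by (intro allI, simp add: Gx, (algebra)?)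
  have c2_0: "(30 * gg c (-2) 1 0 1 + 900 * gg c (-2) 0 0 2 + 180 * gg c (-2) 0 1 1 + 36 * gg c (-2) 0 2 0) = 0"
    using gammaL[OF fin pres _ _ _ eq2, of 0] by (simp add: nth_default_def eval_nat_numeral)
  have c2_1: "(50 * gg c (-2) 1 0 1 + 1200 * gg c (-2) 0 0 2 + 270 * gg c (-2) 0 1 1 + 60 * gg c (-2) 0 2 0) = 0"
    using gammaL[OF fin pres _ _ _ eq2, of 1] by (simp add: nth_default_def eval_nat_numeral)
  have c2_2: "(20 * gg c (-2) 1 0 1 + 400 * gg c (-2) 0 0 2 + 100 * gg c (-2) 0 1 1 + 25 * gg c (-2) 0 2 0) = 0"
    using gammaL[OF fin pres _ _ _ eq2, of 2] by (simp add: nth_default_def eval_nat_numeral)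
  have eq3: "\<forall>y. Gf c (-2) 2 (1 + 0*y + 1*y^2) (1*real 6 + 0*y*(real 6 - 1) + 1*y^2*(real 6 - 2)) (1*(real 6*(real 6 - 1)) + 0*y*((real 6 - 1)*(real 6 - 2)) + 1*y^2*((real 6 - 2)*(real 6 - 3))) = poly (Poly [(30 * gg c (-2) 1 0 1 + 900 * gg c (-2) 0 0 2 + 180 * gg c (-2) 0 1 1 + 36 * gg c (-2) 0 2 0), 0, (42 * gg c (-2) 1 0 1 + 720 * gg c (-2) 0 0 2 + 192 * gg c (-2) 0 1 1 + 48 * gg c (-2) 0 2 0), 0, (12 * gg c (-2) 1 0 1 + 144 * gg c (-2) 0 0 2 + 48 * gg c (-2) 0 1 1 + 16 * gg c (-2) 0 2 0)]) y"
    by (intro allI, simp add: Gx, (algebra)?)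
  have c3_0: "(30 * gg c (-2) 1 0 1 + 900 * gg c (-2) 0 0 2 + 180 * gg c (-2) 0 1 1 + 36 * gg c (-2) 0 2 0) = 0"
    using gammaL[OF fin pres _ _ _ eq3, of 0] by (simp add: nth_default_def eval_nat_numeral)
  have c3_2: "(42 * gg c (-2) 1 0 1 + 720 * gg c (-2) 0 0 2 + 192 * gg c (-2) 0 1 1 + 48 * gg c (-2) 0 2 0) = 0"
    using gammaL[OF fin pres _ _ _ eq3, of 2] by (simp add: nth_default_def eval_nat_numeral)
  have mem2: "(i,j,k) \<in> set [(1,0,1),(0,0,2),(0,1,1),(0,2,0)]" using mem by (simp only: AlX)
  have z0: "gg c (-2) 1 0 1 = 0" using c0_0 c1_2 c2_0 c2_1 c2_2 c3_0 c3_2 by linarith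
  have z1: "gg c (-2) 0 0 2 = 0" using c0_0 c1_2 c2_0 c2_1 c2_2 c3_0 c3_2 by linarith
  have z2: "gg c (-2) 0 1 1 = 0" using c0_0 c1_2 c2_0 c2_1 c2_2 c3_0 c3_2 by linarith
  have z3: "gg c (-2) 0 2 0 = 0" using c0_0 c1_2 c2_0 c2_1 c2_2 c3_0 c3_2 by linarith
  show ?thesis using mem2 z0 z1 z2 z3 by auto
qed

lemma hard_6_2_3:
  assumes fin: "opoly_finite c" and pres: "preserves_Pn c 6" and mem: "(i,j,k) \<in> set (Al 2 (-3))"
  shows "gg c (-3) i j k = 0"
proof -
  have AlX: "Al 2 (-3) = [(0,0,2),(0,1,1)]" by (simp add: Al_def upt_rec)
  have Gx: "Gf c (-3) 2 U0 U1 U2 = gg c (-3) 0 0 2 * U2^2 + gg c (-3) 0 1 1 * U1 * U2" for U0 U1 U2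
    by (simp add: Gf_reindex AlX algebra_simps)
  have eq0: "\<forall>y. Gf c (-3) 2 (1 + 0*y + 0*y^2) (1*real 6 + 0*y*(real 6 - 1) + 0*y^2*(real 6 - 2)) (1*(real 6*(real 6 - 1)) + 0*y*((real 6 - 1)*(real 6 - 2)) + 0*y^2*((real 6 - 2)*(real 6 - 3))) = poly (Poly [(900 * gg c (-3) 0 0 2 + 180 * gg c (-3) 0 1 1), 0, 0, 0, 0]) y"
    by (intro allI, simp add: Gx, (algebra)?)
  have c0_0: "(900 * gg c (-3) 0 0 2 + 180 * gg c (-3) 0 1 1) = 0"
    using gammaL[OF fin pres _ _ _ eq0, of 0] by (simp add: nth_default_def eval_nat_numeral)
  have eq1: "\<forall>y. Gf c (-3) 2 (0 + 1*y + 0*y^2) (0*real 6 + 1*y*(real 6 - 1) + 0*y^2*(real 6 - 2)) (0*(real 6*(real 6 - 1)) + 1*y*((real 6 - 1)*(real 6 - 2)) + 0*y^2*((real 6 - 2)*(real 6 - 3))) = poly (Poly [0, 0, (400 * gg c (-3) 0 0 2 + 100 * gg c (-3) 0 1 1), 0, 0]) y"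
    by (intro allI, simp add: Gx, (algebra)?)
  have c1_2: "(400 * gg c (-3) 0 0 2 + 100 * gg c (-3) 0 1 1) = 0"
    using gammaL[OF fin pres _ _ _ eq1, of 2] by (simp add: nth_default_def eval_nat_numeral)
  have mem2: "(i,j,k) \<in> set [(0,0,2),(0,1,1)]" using mem by (simp only: AlX)
  have z0: "gg c (-3) 0 0 2 = 0" using c0_0 c1_2 by linarith
  have z1: "gg c (-3) 0 1 1 = 0" using c0_0 c1_2 by linarith
  show ?thesis using mem2 z0 z1 by auto
qed

lemma hard_6_2_4:
  assumes fin: "opoly_finite c" and pres: "preserves_Pn c 6" and mem: "(i,j,k) \<in> set (Al 2 (-4))"
  shows "gg c (-4) i j k = 0"
proof -
  have AlX: "Al 2 (-4) = [(0,0,2)]" by (simp add: Al_def upt_rec)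
  have Gx: "Gf c (-4) 2 U0 U1 U2 = gg c (-4) 0 0 2 * U2^2" for U0 U1 U2
    by (simp add: Gf_reindex AlX algebra_simps)
  have eq0: "\<forall>y. Gf c (-4) 2 (1 + 0*y + 0*y^2) (1*real 6 + 0*y*(real 6 - 1) + 0*y^2*(real 6 - 2)) (1*(real 6*(real 6 - 1)) + 0*y*((real 6 - 1)*(real 6 - 2)) + 0*y^2*((real 6 - 2)*(real 6 - 3))) = poly (Poly [(900 * gg c (-4) 0 0 2), 0, 0, 0, 0]) y"
    by (intro allI, simp add: Gx, (algebra)?)
  have c0_0: "(900 * gg c (-4) 0 0 2) = 0"
    using gammaL[OF fin pres _ _ _ eq0, of 0] by (simp add: nth_default_def eval_nat_numeral)
  have mem2: "(i,j,k) \<in> set [(0,0,2)]" using mem by (simp only: AlX)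
  have z0: "gg c (-4) 0 0 2 = 0" using c0_0 by linarith
  show ?thesis using mem2 z0 by auto
qed

lemma hard_6_3_6:
  assumes fin: "opoly_finite c" and pres: "preserves_Pn c 6" and mem: "(i,j,k) \<in> set (Al 3 (-6))"
  shows "gg c (-6) i j k = 0"
proof -
  have AlX: "Al 3 (-6) = [(0,0,3)]" by (simp add: Al_def upt_rec)
  have Gx: "Gf c (-6) 3 U0 U1 U2 = gg c (-6) 0 0 3 * U2^3" for U0 U1 U2
    by (simp add: Gf_reindex AlX algebra_simps)
  have eq0: "\<forall>y. Gf c (-6) 3 (1 + 0*y + 0*y^2) (1*real 6 + 0*y*(real 6 - 1) + 0*y^2*(real 6 - 2)) (1*(real 6*(real 6 - 1)) + 0*y*((real 6 - 1)*(real 6 - 2)) + 0*y^2*((real 6 - 2)*(real 6 - 3))) = poly (Poly [(27000 * gg c (-6) 0 0 3), 0, 0, 0, 0, 0, 0]) y"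
    by (intro allI, simp add: Gx, (algebra)?)
  have c0_0: "(27000 * gg c (-6) 0 0 3) = 0"
    using gammaL[OF fin pres _ _ _ eq0, of 0] by (simp add: nth_default_def eval_nat_numeral)
  have mem2: "(i,j,k) \<in> set [(0,0,3)]" using mem by (simp only: AlX)
  have z0: "gg c (-6) 0 0 3 = 0" using c0_0 by linarith
  show ?thesis using mem2 z0 by auto
qed

lemma hard_7_2_3:
  assumes fin: "opoly_finite c" and pres: "preserves_Pn c 7" and mem: "(i,j,k) \<in> set (Al 2 (-3))"
  shows "gg c (-3) i j k = 0"
proof -
  have AlX: "Al 2 (-3) = [(0,0,2),(0,1,1)]" by (simp add: Al_def upt_rec)
  have Gx: "Gf c (-3) 2 U0 U1 U2 = gg c (-3) 0 0 2 * U2^2 + gg c (-3) 0 1 1 * U1 * U2" for U0 U1 U2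
    by (simp add: Gf_reindex AlX algebra_simps)
  have eq0: "\<forall>y. Gf c (-3) 2 (1 + 0*y + 0*y^2) (1*real 7 + 0*y*(real 7 - 1) + 0*y^2*(real 7 - 2)) (1*(real 7*(real 7 - 1)) + 0*y*((real 7 - 1)*(real 7 - 2)) + 0*y^2*((real 7 - 2)*(real 7 - 3))) = poly (Poly [(1764 * gg c (-3) 0 0 2 + 294 * gg c (-3) 0 1 1), 0, 0, 0, 0]) y"
    by (intro allI, simp add: Gx, (algebra)?)
  have c0_0: "(1764 * gg c (-3) 0 0 2 + 294 * gg c (-3) 0 1 1) = 0"
    using gammaL[OF fin pres _ _ _ eq0, of 0] by (simp add: nth_default_def eval_nat_numeral)
  have eq1: "\<forall>y. Gf c (-3) 2 (0 + 1*y + 0*y^2) (0*real 7 + 1*y*(real 7 - 1) + 0*y^2*(real 7 - 2)) (0*(real 7*(real 7 - 1)) + 1*y*((real 7 - 1)*(real 7 - 2)) + 0*y^2*((real 7 - 2)*(real 7 - 3))) = poly (Poly [0, 0, (900 * gg c (-3) 0 0 2 + 180 * gg c (-3) 0 1 1), 0, 0]) y"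
    by (intro allI, simp add: Gx, (algebra)?)
  have c1_2: "(900 * gg c (-3) 0 0 2 + 180 * gg c (-3) 0 1 1) = 0"
    using gammaL[OF fin pres _ _ _ eq1, of 2] by (simp add: nth_default_def eval_nat_numeral)
  have mem2: "(i,j,k) \<in> set [(0,0,2),(0,1,1)]" using mem by (simp only: AlX)
  have z0: "gg c (-3) 0 0 2 = 0" using c0_0 c1_2 by linarith
  have z1: "gg c (-3) 0 1 1 = 0" using c0_0 c1_2 by linarith
  show ?thesis using mem2 z0 z1 by auto
qed

lemma hard_7_2_4:
  assumes fin: "opoly_finite c" and pres: "preserves_Pn c 7" and mem: "(i,j,k) \<in> set (Al 2 (-4))"
  shows "gg c (-4) i j k = 0"
proof -
  have AlX: "Al 2 (-4) = [(0,0,2)]" by (simp add: Al_def upt_rec)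
  have Gx: "Gf c (-4) 2 U0 U1 U2 = gg c (-4) 0 0 2 * U2^2" for U0 U1 U2
    by (simp add: Gf_reindex AlX algebra_simps)
  have eq0: "\<forall>y. Gf c (-4) 2 (1 + 0*y + 0*y^2) (1*real 7 + 0*y*(real 7 - 1) + 0*y^2*(real 7 - 2)) (1*(real 7*(real 7 - 1)) + 0*y*((real 7 - 1)*(real 7 - 2)) + 0*y^2*((real 7 - 2)*(real 7 - 3))) = poly (Poly [(1764 * gg c (-4) 0 0 2), 0, 0, 0, 0]) y"
    by (intro allI, simp add: Gx, (algebra)?)
  have c0_0: "(1764 * gg c (-4) 0 0 2) = 0"
    using gammaL[OF fin pres _ _ _ eq0, of 0] by (simp add: nth_default_def eval_nat_numeral)
  have mem2: "(i,j,k) \<in> set [(0,0,2)]" using mem by (simp only: AlX)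
  have z0: "gg c (-4) 0 0 2 = 0" using c0_0 by linarith
  show ?thesis using mem2 z0 by auto
qed

lemma hard_8_2_4:
  assumes fin: "opoly_finite c" and pres: "preserves_Pn c 8" and mem: "(i,j,k) \<in> set (Al 2 (-4))"
  shows "gg c (-4) i j k = 0"
proof -
  have AlX: "Al 2 (-4) = [(0,0,2)]" by (simp add: Al_def upt_rec)
  have Gx: "Gf c (-4) 2 U0 U1 U2 = gg c (-4) 0 0 2 * U2^2" for U0 U1 U2
    by (simp add: Gf_reindex AlX algebra_simps)
  have eq0: "\<forall>y. Gf c (-4) 2 (1 + 0*y + 0*y^2) (1*real 8 + 0*y*(real 8 - 1) + 0*y^2*(real 8 - 2)) (1*(real 8*(real 8 - 1)) + 0*y*((real 8 - 1)*(real 8 - 2)) + 0*y^2*((real 8 - 2)*(real 8 - 3))) = poly (Poly [(3136 * gg c (-4) 0 0 2), 0, 0, 0, 0]) y"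
    by (intro allI, simp add: Gx, (algebra)?)
  have c0_0: "(3136 * gg c (-4) 0 0 2) = 0"
    using gammaL[OF fin pres _ _ _ eq0, of 0] by (simp add: nth_default_def eval_nat_numeral)
  have mem2: "(i,j,k) \<in> set [(0,0,2)]" using mem by (simp only: AlX)
  have z0: "gg c (-4) 0 0 2 = 0" using c0_0 by linarith
  show ?thesis using mem2 z0 by auto
qed

lemma hard_cases:
  fixes n d :: nat and w :: int
  assumes n5: "n \<ge> 5" and d2: "d \<ge> 2" and wl: "w + 2*int d \<ge> 0" and nh: "\<not> (2*int d + int n < w + int n * int d)"
  shows "(n = 5 \<and> d = 2 \<and> w = (-1)) \<or> (n = 5 \<and> d = 2 \<and> w = (-2)) \<or> (n = 5 \<and> d = 2 \<and> w = (-3)) \<or> (n = 5 \<and> d = 2 \<and> w = (-4)) \<or> (n = 5 \<and> d = 3 \<and> w = (-4)) \<or> (n = 5 \<and> d = 3 \<and> w = (-5)) \<or> (n = 5 \<and> d = 3 \<and> w = (-6)) \<or> (n = 5 \<and> d = 4 \<and> w = (-7)) \<or> (n = 5 \<and> d = 4 \<and> w = (-8)) \<or> (n = 5 \<and> d = 5 \<and> w = (-10)) \<or> (n = 6 \<and> d = 2 \<and> w = (-2)) \<or> (n = 6 \<and> d = 2 \<and> w = (-3)) \<or> (n = 6 \<and> d = 2 \<and> w = (-4)) \<or> (n = 6 \<and> d = 3 \<and> w = (-6)) \<or> (n = 7 \<and> d = 2 \<and> w = (-3)) \<or> (n = 7 \<and> d = 2 \<and> w = (-4)) \<or> (n = 8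 \<and> d = 2 \<and> w = (-4))"
proof -
  have nd: "n * d \<le> 4*d + n"
  proof -
    have "int (n * d) \<le> 4 * int d + int n" using wl nh by simp
    then show ?thesis by linarith
  qed
  obtain e where e: "d = Suc e" using d2 by (cases d) auto
  have ne: "n * e \<le> 4 * e + 4" using nd by (simp add: e)
  have "5 * e \<le> n * e" using n5 by (intro mult_right_mono) auto
  then have e4: "e \<le> 4" using ne by linarith
  have "d = 2 \<or> d = 3 \<or> d = 4 \<or> d = 5" using e4 d2 e by auto
  then show ?thesis
  proof (elim disjE)
    assume hd: "d = 2"
    have nb: "n \<le> 8" using nd unfolding hd by linarith
    have "n = 5 \<or> n = 6 \<or> n = 7 \<or> n = 8" using nb n5 by linarith
    then show ?thesis
    proof (elim disjE)
      assume hn: "n = 5"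
      have "w = (-4) \<or> w = (-3) \<or> w = (-2) \<or> w = (-1)" using wl nh hd hn by (simp; arith)
      then show ?thesis using hd hn by auto
    next
      assume hn: "n = 6"
      have "w = (-4) \<or> w = (-3) \<or> w = (-2)" using wl nh hd hn by (simp; arith)
      then show ?thesis using hd hn by auto
    next
      assume hn: "n = 7"
      have "w = (-4) \<or> w = (-3)" using wl nh hd hn by (simp; arith)
      then show ?thesis using hd hn by auto
    next
      assume hn: "n = 8"
      have "w = (-4)" using wl nh hd hn by (simp; arith)
      then show ?thesis using hd hn by auto
    qed
  next
    assume hd: "d = 3"
    have nb: "n \<le> 6" using nd unfolding hd by linarith
    have "n = 5 \<or> n = 6" using nb n5 by linarith
    then show ?thesis
    proof (elim disjE)
      assume hn: "n = 5"
      have "w = (-6) \<or> w = (-5) \<or> w = (-4)" using wl nh hd hn by (simp; arith)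
      then show ?thesis using hd hn by auto
    next
      assume hn: "n = 6"
      have "w = (-6)" using wl nh hd hn by (simp; arith)
      then show ?thesis using hd hn by auto
    qed
  next
    assume hd: "d = 4"
    have nb: "n \<le> 5" using nd unfolding hd by linarith
    have hn: "n = 5" using nb n5 by linarith
    have "w = (-8) \<or> w = (-7)" using wl nh hd hn by (simp; arith)
    then show ?thesis using hd hn by auto
  next
    assume hd: "d = 5"
    have nb: "n \<le> 5" using nd unfolding hd by linarith
    have hn: "n = 5" using nb n5 by linarith
    have "w = (-10)" using wl nh hd hn by (simp; arith)
    then show ?thesis using hd hn by auto
  qed
qed

theorem mainTheorem5:
  fixes c :: opoly and n :: nat
  assumes "n \<ge> 2"
    and "opoly_finite c"
    and "opoly_udeg_ge2 c"
    and "preserves_Pn c n"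
  shows "n \<le> 4"
proof (rule ccontr)
  assume "\<not> n \<le> 4"
  then have n5: "n \<ge> 5" by simp
  have fin: "opoly_finite c" and pres: "preserves_Pn c n" using assms by auto
  obtain a0 i0 j0 k0 where c0: "c (a0,i0,j0,k0) \<noteq> 0" and deg2: "i0 + j0 + k0 \<ge> 2"
    using assms(3) unfolding opoly_udeg_ge2_def by blast
  define d where "d = i0 + j0 + k0"
  define w where "w = int a0 - int j0 - 2 * int k0"
  have d2: "d \<ge> 2" using deg2 by (simp add: d_def)
  have wl: "w + 2 * int d \<ge> 0" by (simp add: w_def d_def)
  have mem: "(i0,j0,k0) \<in> set (Al d w)" by (simp add: mem_Al d_def w_def)
  have gnz: "gg c w i0 j0 k0 \<noteq> 0"
  proof -
    have "nat (w + int j0 + 2 * int k0) = a0" by (simp add: w_def)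
    then show ?thesis using c0 by (simp add: gg_def)
  qed
  have "gg c w i0 j0 k0 = 0"
  proof (cases "2*int d + int n < w + int n * int d")
    case True
    have "\<forall>U0 U1 U2. Gf c w d U0 U1 U2 = 0" by (rule easy_regime[OF fin pres n5 wl True])
    then show ?thesis using mem by (rule gg_zero_of_Gf_zero)
  next
    case False
    from hard_cases[OF n5 d2 wl False] show ?thesis
    proof (elim disjE)
      assume h: "n = 5 \<and> d = 2 \<and> w = (-1)"
      then show ?thesis using hard_5_2_1[OF fin, of i0 j0 k0] pres mem by simp
    next
      assume h: "n = 5 \<and> d = 2 \<and> w = (-2)"
      then show ?thesis using hard_5_2_2[OF fin, of i0 j0 k0] pres mem by simp
    next
      assume h: "n = 5 \<and> d = 2 \<and> w = (-3)"
      then show ?thesis using hard_5_2_3[OF fin, of i0 j0 k0] pres mem by simp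
    next
      assume h: "n = 5 \<and> d = 2 \<and> w = (-4)"
      then show ?thesis using hard_5_2_4[OF fin, of i0 j0 k0] pres mem by simp
    next
      assume h: "n = 5 \<and> d = 3 \<and> w = (-4)"
      then show ?thesis using hard_5_3_4[OF fin, of i0 j0 k0] pres mem by simp
    next
      assume h: "n = 5 \<and> d = 3 \<and> w = (-5)"
      then show ?thesis using hard_5_3_5[OF fin, of i0 j0 k0] pres mem by simp
    next
      assume h: "n = 5 \<and> d = 3 \<and> w = (-6)"
      then show ?thesis using hard_5_3_6[OF fin, of i0 j0 k0] pres mem by simp
    next
      assume h: "n = 5 \<and> d = 4 \<and> w = (-7)"
      then show ?thesis using hard_5_4_7[OF fin, of i0 j0 k0] pres mem by simp
    next
      assume h: "n = 5 \<and> d = 4 \<and> w = (-8)"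
      then show ?thesis using hard_5_4_8[OF fin, of i0 j0 k0] pres mem by simp
    next
      assume h: "n = 5 \<and> d = 5 \<and> w = (-10)"
      then show ?thesis using hard_5_5_10[OF fin, of i0 j0 k0] pres mem by simp
    next
      assume h: "n = 6 \<and> d = 2 \<and> w = (-2)"
      then show ?thesis using hard_6_2_2[OF fin, of i0 j0 k0] pres mem by simp
    next
      assume h: "n = 6 \<and> d = 2 \<and> w = (-3)"
      then show ?thesis using hard_6_2_3[OF fin, of i0 j0 k0] pres mem by simp
    next
      assume h: "n = 6 \<and> d = 2 \<and> w = (-4)"
      then show ?thesis using hard_6_2_4[OF fin, of i0 j0 k0] pres mem by simp
    next
      assume h: "n = 6 \<and> d = 3 \<and> w = (-6)"
      then show ?thesis using hard_6_3_6[OF fin, of i0 j0 k0] pres mem by simp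
    next
      assume h: "n = 7 \<and> d = 2 \<and> w = (-3)"
      then show ?thesis using hard_7_2_3[OF fin, of i0 j0 k0] pres mem by simp
    next
      assume h: "n = 7 \<and> d = 2 \<and> w = (-4)"
      then show ?thesis using hard_7_2_4[OF fin, of i0 j0 k0] pres mem by simp
    next
      assume h: "n = 8 \<and> d = 2 \<and> w = (-4)"
      then show ?thesis using hard_8_2_4[OF fin, of i0 j0 k0] pres mem by simp
    qed
  qed
  with gnz show False by simp
qed

end
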